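(* Let $G=(X,b,m,c)$ be a weighted graph with $c=0$, let $p\in[1,\infty)$ and fix $o\in X$. The following are equivalent: (i) $G$ is $p$-parabolic; (ii) for one (equivalently, every) compactification $Y$ of $X$ one has $\mathrm{cap}_{o,p}(\partial_YX)=0$; (iii) there is $f\in D^p$ with $\liminf_{x\to\infty}f(x)=\infty$; (iv) there is a metric $\sigma$ on $X$ which is $p$-intrinsic with respect to some finite measure, induces the discrete topology on $X$, and whose distance balls $B_{r,\sigma}(x)=\{y:\sigma(x,y)\le r\}$ are finite for all $x\in X$, $r\ge0$; (v) there exists a $p$-intrinsic alternative edge weight $w$ with respect to some finite measure such that all distance balls with respect to the path pseudometric $d_w$ are finite.
   Context: Weighted graph $G=(X,b,m,c)$: $X$ countably infinite; $b$ symmetric, nonnegative, zero on the diagonal, $\sum_yb(x,y)<\infty$; $m>0$; $c\ge0$; $x\sim y$ iff $b(x,y)>0$; $X$ connected. $\mathcal{E}_p(f)=\frac12\sum_{x,y}b(x,y)|f(x)-f(y)|^p+\sum_xc(x)|f(x)|^p$, $D^p=\{f:\mathcal{E}_p(f)<\infty\}$, $\|f\|_{o,p}=(\mathcal{E}_p(f)+|f(o)|^p)^{1/p}$. For finite $K$, $\mathrm{cap}_p(K)=\inf\{\mathcal{E}_p(\varphi):\varphi\text{ finitely supported},\varphi\ge1\text{ on }K\}$; $G$ is $p$-parabolic if all these vanish. A compactification of $X$ is a compact Hausdorff space $Y$ containing $X$ as a dense subset on which the induced topology is discrete; $\partial_YX=Y\setminus X$. For $V\subseteq X$, $\mathrm{cap}_{o,p}(V)=\inf\{\|u\|_{o,p}:u\in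 D^p,\ u\ge1\text{ on }V\}$ (infimum of the empty set is $\infty$), and for $A\subseteq Y$, $\mathrm{cap}_{o,p}(A)=\inf\{\mathrm{cap}_{o,p}(O\cap X):O\text{ open in }Y,\ A\subseteq O\}$. $\liminf_{x\to\infty}f(x)=\sup_{K\subseteq X\text{ finite}}\inf_{x\in X\setminus K}f(x)$. A nonnegative symmetric function $w$ on $X\times X$ is $p$-intrinsic with respect to a measure $\mu\colon X\to[0,\infty)$ if $\sum_{y\in X}b(x,y)w(x,y)^p\le\mu(x)$ for all $x$; $\mu$ is finite if $\sum_x\mu(x)<\infty$. An alternative edge weight is a symmetric $w\colon X\times X\to[0,\infty)$ with $w(x,y)>0$ whenever $x\sim y$. For a path or ray $\gamma=(x_i)$ (a ray being an infinite sequence of pairwise distinct vertices with $x_i\sim x_{i+1}$), $l_w(\gamma)=\sum_iw(x_i,x_{i+1})$, and $d_w(x,y)=\inf\{l_w(\gamma):\gamma\text{ a path or ray from }x\text{ to }y\}$. *)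

theory Defs
  imports "HOL-Analysis.Analysis"
begin

definition weighted_graph ::
  "('x \<Rightarrow> 'x \<Rightarrow> real) \<Rightarrow> ('x \<Rightarrow> real) \<Rightarrow> ('x \<Rightarrow> real) \<Rightarrow> bool" where
  "weighted_graph b m c \<longleftrightarrow>
     countable (UNIV :: 'x set) \<and> infinite (UNIV :: 'x set) \<and>
     (\<forall>x y. b x y = b y x) \<and> (\<forall>x y. b x y \<ge> 0) \<and> (\<forall>x. b x x = 0) \<and>
     (\<forall>x. (\<lambda>y. b x y) summable_on UNIV) \<and>
     (\<forall>x. m x > 0) \<and> (\<forall>x. c x \<ge> 0) \<and>
     (\<forall>x y. (\<lambda>u v. b u v > 0)\<^sup>*\<^sup>* x y)"

definition energy ::
  "('x \<Rightarrow> 'x \<Rightarrow> real) \<Rightarrow> ('x \<Rightarrow> real) \<Rightarrow> real \<Rightarrow> ('x \<Rightarrow> real) \<Rightarrow> ennreal" where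
  "energy b c p f =
     (\<Sum>\<^sub>\<infinity>(x, y)\<in>UNIV. ennreal (b x y * \<bar>f x - f y\<bar> powr p)) / 2
     + (\<Sum>\<^sub>\<infinity>x\<in>UNIV. ennreal (c x * \<bar>f x\<bar> powr p))"

definition Dp :: "('x \<Rightarrow> 'x \<Rightarrow> real) \<Rightarrow> ('x \<Rightarrow> real) \<Rightarrow> real \<Rightarrow> ('x \<Rightarrow> real) set" where
  "Dp b c p = {f. energy b c p f < \<infinity>}"

definition onorm ::
  "('x \<Rightarrow> 'x \<Rightarrow> real) \<Rightarrow> ('x \<Rightarrow> real) \<Rightarrow> real \<Rightarrow> 'x \<Rightarrow> ('x \<Rightarrow> real) \<Rightarrow> real" where
  "onorm b c p xo f = (enn2real (energy b c p f) + \<bar>f xo\<bar> powr p) powr (1 / p)"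

definition capp ::
  "('x \<Rightarrow> 'x \<Rightarrow> real) \<Rightarrow> ('x \<Rightarrow> real) \<Rightarrow> real \<Rightarrow> 'x set \<Rightarrow> ennreal" where
  "capp b c p K = (INF \<phi> \<in> {\<phi>. finite {x. \<phi> x \<noteq> 0} \<and> (\<forall>x\<in>K. \<phi> x \<ge> 1)}. energy b c p \<phi>)"

definition p_parabolic ::
  "('x \<Rightarrow> 'x \<Rightarrow> real) \<Rightarrow> ('x \<Rightarrow> real) \<Rightarrow> real \<Rightarrow> bool" where
  "p_parabolic b c p \<longleftrightarrow> (\<forall>K. finite K \<longrightarrow> capp b c p K = 0)"

text \<open>cap_{o,p} of a vertex set (infimum of the empty set is \<infinity>).\<close>
definition capo ::
  "('x \<Rightarrow> 'x \<Rightarrow> real) \<Rightarrow> ('x \<Rightarrow> real) \<Rightarrow> real \<Rightarrow> 'x \<Rightarrow> 'x set \<Rightarrow> ennreal" where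
  "capo b c p xo V =
     (INF u \<in> {u. u \<in> Dp b c p \<and> (\<forall>x\<in>V. u x \<ge> 1)}. ennreal (onorm b c p xo u))"

definition compactification :: "'y topology \<Rightarrow> ('x \<Rightarrow> 'y) \<Rightarrow> bool" where
  "compactification T \<iota> \<longleftrightarrow>
     compact_space T \<and> Hausdorff_space T \<and> inj \<iota> \<and> range \<iota> \<subseteq> topspace T \<and>
     T closure_of (range \<iota>) = topspace T \<and>
     subtopology T (range \<iota>) = discrete_topology (range \<iota>)"

definition boundary :: "'y topology \<Rightarrow> ('x \<Rightarrow> 'y) \<Rightarrow> 'y set" where
  "boundary T \<iota> = topspace T - range \<iota>"

definition capY ::
  "('x \<Rightarrow> 'x \<Rightarrow> real) \<Rightarrow> ('x \<Rightarrow> real) \<Rightarrow> real \<Rightarrow> 'x \<Rightarrow> 'y topology \<Rightarrow> ('x \<Rightarrow> 'y)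
     \<Rightarrow> 'y set \<Rightarrow> ennreal" where
  "capY b c p xo T \<iota> A = (INF U \<in> {U. openin T U \<and> A \<subseteq> U}. capo b c p xo (\<iota> -` U))"

definition liminf_inf :: "('x \<Rightarrow> real) \<Rightarrow> ereal" where
  "liminf_inf f = (SUP K \<in> {K. finite K}. INF x \<in> - K. ereal (f x))"

definition finite_measure_fn :: "('x \<Rightarrow> real) \<Rightarrow> bool" where
  "finite_measure_fn \<mu> \<longleftrightarrow> (\<forall>x. \<mu> x \<ge> 0) \<and> \<mu> summable_on UNIV"

definition p_intrinsic ::
  "('x \<Rightarrow> 'x \<Rightarrow> real) \<Rightarrow> real \<Rightarrow> ('x \<Rightarrow> 'x \<Rightarrow> real) \<Rightarrow> ('x \<Rightarrow> real) \<Rightarrow> bool" where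
  "p_intrinsic b p w \<mu> \<longleftrightarrow>
     (\<forall>x y. w x y \<ge> 0) \<and> (\<forall>x y. w x y = w y x) \<and>
     (\<forall>x. (\<Sum>\<^sub>\<infinity>y\<in>UNIV. ennreal (b x y * w x y powr p)) \<le> ennreal (\<mu> x))"

definition is_metric :: "('x \<Rightarrow> 'x \<Rightarrow> real) \<Rightarrow> bool" where
  "is_metric \<sigma> \<longleftrightarrow> (\<forall>x y. \<sigma> x y \<ge> 0) \<and> (\<forall>x y. \<sigma> x y = 0 \<longleftrightarrow> x = y) \<and>
     (\<forall>x y. \<sigma> x y = \<sigma> y x) \<and> (\<forall>x y z. \<sigma> x z \<le> \<sigma> x y + \<sigma> y z)"

definition induces_discrete :: "('x \<Rightarrow> 'x \<Rightarrow> real) \<Rightarrow> bool" where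
  "induces_discrete \<sigma> \<longleftrightarrow> (\<forall>x. \<exists>\<epsilon>>0. \<forall>y. \<sigma> x y < \<epsilon> \<longrightarrow> y = x)"

definition alt_edge_weight :: "('x \<Rightarrow> 'x \<Rightarrow> real) \<Rightarrow> ('x \<Rightarrow> 'x \<Rightarrow> real) \<Rightarrow> bool" where
  "alt_edge_weight b w \<longleftrightarrow> (\<forall>x y. w x y = w y x) \<and> (\<forall>x y. w x y \<ge> 0) \<and>
     (\<forall>x y. b x y > 0 \<longrightarrow> w x y > 0)"

definition is_path :: "('x \<Rightarrow> 'x \<Rightarrow> real) \<Rightarrow> 'x list \<Rightarrow> 'x \<Rightarrow> 'x \<Rightarrow> bool" where
  "is_path b \<gamma> x y \<longleftrightarrow> \<gamma> \<noteq> [] \<and> hd \<gamma> = x \<and> last \<gamma> = y \<and>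
     (\<forall>i. Suc i < length \<gamma> \<longrightarrow> b (\<gamma> ! i) (\<gamma> ! Suc i) > 0)"

definition path_length :: "('x \<Rightarrow> 'x \<Rightarrow> real) \<Rightarrow> 'x list \<Rightarrow> real" where
  "path_length w \<gamma> = (\<Sum>i<length \<gamma> - 1. w (\<gamma> ! i) (\<gamma> ! Suc i))"

definition path_dist :: "('x \<Rightarrow> 'x \<Rightarrow> real) \<Rightarrow> ('x \<Rightarrow> 'x \<Rightarrow> real) \<Rightarrow> 'x \<Rightarrow> 'x \<Rightarrow> real" where
  "path_dist b w x y = Inf {path_length w \<gamma> | \<gamma>. is_path b \<gamma> x y}"

end

theory Submission
  imports Defs
begin


lemma summable_ennreal[simp]: "(f :: 'a \<Rightarrow> ennreal) summable_on A"
  by (simp add: nonneg_summable_on_complete)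


lemma infsum_cmult_ennreal:
  fixes f :: "'a \<Rightarrow> ennreal"
  shows "(\<Sum>\<^sub>\<infinity>x\<in>A. c * f x) = c * (\<Sum>\<^sub>\<infinity>x\<in>A. f x)"
proof -
  have "(\<Sum>\<^sub>\<infinity>x\<in>A. c * f x) = (SUP F\<in>{F. finite F \<and> F\<subseteq>A}. sum (\<lambda>x. c * f x) F)"
    by (rule nonneg_infsum_complete) simp
  also have "\<dots> = (SUP F\<in>{F. finite F \<and> F\<subseteq>A}. c * sum f F)"
    by (simp add: sum_distrib_left)
  also have "\<dots> = c * (SUP F\<in>{F. finite F \<and> F\<subseteq>A}. sum f F)"
    by (simp add: SUP_mult_left_ennreal)
  also have "(SUP F\<in>{F. finite F \<and> F\<subseteq>A}. sum f F) = (\<Sum>\<^sub>\<infinity>x\<in>A. f x)"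
    by (rule nonneg_infsum_complete[symmetric]) simp
  finally show ?thesis .
qed

lemma infsum_single_le_ennreal:
  fixes f :: "'a \<Rightarrow> ennreal"
  assumes "a \<in> A"
  shows "f a \<le> (\<Sum>\<^sub>\<infinity>x\<in>A. f x)"
proof -
  have "f a = sum f {a}" by simp
  also have "\<dots> \<le> (SUP F\<in>{F. finite F \<and> F\<subseteq>A}. sum f F)"
    by (rule SUP_upper) (use assms in auto)
  also have "\<dots> = (\<Sum>\<^sub>\<infinity>x\<in>A. f x)"
    by (rule nonneg_infsum_complete[symmetric]) simp
  finally show ?thesis .
qed

lemma infsum_subset_le_ennreal:
  fixes f :: "'a \<Rightarrow> ennreal"
  assumes "A \<subseteq> B"
  shows "(\<Sum>\<^sub>\<infinity>x\<in>A. f x) \<le> (\<Sum>\<^sub>\<infinity>x\<in>B. f x)"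
proof -
  have "(\<Sum>\<^sub>\<infinity>x\<in>A. f x) = (SUP F\<in>{F. finite F \<and> F\<subseteq>A}. sum f F)"
    by (rule nonneg_infsum_complete) simp
  also have "\<dots> \<le> (SUP F\<in>{F. finite F \<and> F\<subseteq>B}. sum f F)"
    by (rule SUP_subset_mono) (use assms in auto)
  also have "\<dots> = (\<Sum>\<^sub>\<infinity>x\<in>B. f x)"
    by (rule nonneg_infsum_complete[symmetric]) simp
  finally show ?thesis .
qed

lemma infsum_mono_ennreal:
  fixes f g :: "'a \<Rightarrow> ennreal"
  assumes "\<And>x. x \<in> A \<Longrightarrow> f x \<le> g x"
  shows "(\<Sum>\<^sub>\<infinity>x\<in>A. f x) \<le> (\<Sum>\<^sub>\<infinity>x\<in>A. g x)"
  by (rule infsum_mono) (use assms in auto)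

lemma infsum_add_ennreal:
  fixes f g :: "'a \<Rightarrow> ennreal"
  shows "(\<Sum>\<^sub>\<infinity>x\<in>A. f x + g x) = (\<Sum>\<^sub>\<infinity>x\<in>A. f x) + (\<Sum>\<^sub>\<infinity>x\<in>A. g x)"
  by (rule infsum_add) auto

lemma infsum_ennreal_SUP:
  fixes f :: "'a \<Rightarrow> ennreal"
  shows "(\<Sum>\<^sub>\<infinity>x\<in>A. f x) = (SUP F\<in>{F. finite F \<and> F\<subseteq>A}. sum f F)"
  by (rule nonneg_infsum_complete) simp

lemma sum_SUP_directed_ennreal:
  fixes s :: "'a \<Rightarrow> 'b set \<Rightarrow> ennreal"
  assumes "finite G"
  shows "(\<Sum>x\<in>G. SUP H\<in>{H. finite H \<and> H \<subseteq> B}. (\<Sum>y\<in>H. f x y))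
         \<le> (SUP H\<in>{H. finite H \<and> H \<subseteq> B}. \<Sum>x\<in>G. \<Sum>y\<in>H. (f x y :: ennreal))"
  using assms
proof (induction G rule: finite_induct)
  case empty
  then show ?case by simp
next
  case (insert a G)
  let ?I = "{H. finite H \<and> H \<subseteq> B}"
  have "(\<Sum>x\<in>insert a G. SUP H\<in>?I. (\<Sum>y\<in>H. f x y))
        = (SUP H\<in>?I. (\<Sum>y\<in>H. f a y)) + (\<Sum>x\<in>G. SUP H\<in>?I. (\<Sum>y\<in>H. f x y))"
    using insert by simp
  also have "\<dots> \<le> (SUP H\<in>?I. (\<Sum>y\<in>H. f a y)) + (SUP H\<in>?I. \<Sum>x\<in>G. \<Sum>y\<in>H. f x y)"
    using insert by (intro add_left_mono) 
  also have "\<dots> = (SUP H\<in>?I. (\<Sum>y\<in>H. f a y) + (\<Sum>x\<in>G. \<Sum>y\<in>H. f x y))"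
  proof (rule SUP_add_directed_ennreal[symmetric])
    fix i j assume "i \<in> ?I" "j \<in> ?I"
    then have k: "i \<union> j \<in> ?I" by auto
    have "(\<Sum>y\<in>i. f a y) \<le> (\<Sum>y\<in>i \<union> j. f a y)"
      using k by (intro sum_mono2) auto
    moreover have "(\<Sum>x\<in>G. \<Sum>y\<in>j. f x y) \<le> (\<Sum>x\<in>G. \<Sum>y\<in>i \<union> j. f x y)"
      using k by (intro sum_mono sum_mono2) auto
    ultimately show "\<exists>k\<in>?I. (\<Sum>y\<in>i. f a y) + (\<Sum>x\<in>G. \<Sum>y\<in>j. f x y)
          \<le> (\<Sum>y\<in>k. f a y) + (\<Sum>x\<in>G. \<Sum>y\<in>k. f x y)"
      using k by (intro bexI[of _ "i \<union> j"] add_mono) auto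
  qed
  also have "\<dots> = (SUP H\<in>?I. \<Sum>x\<in>insert a G. \<Sum>y\<in>H. f x y)"
    using insert by simp
  finally show ?case .
qed

lemma infsum_Sigma_ennreal:
  fixes f :: "'a \<times> 'b \<Rightarrow> ennreal"
  shows "(\<Sum>\<^sub>\<infinity>z\<in>A \<times> B. f z) = (\<Sum>\<^sub>\<infinity>x\<in>A. \<Sum>\<^sub>\<infinity>y\<in>B. f (x, y))"
proof (rule antisym)
  show "(\<Sum>\<^sub>\<infinity>z\<in>A \<times> B. f z) \<le> (\<Sum>\<^sub>\<infinity>x\<in>A. \<Sum>\<^sub>\<infinity>y\<in>B. f (x, y))"
    unfolding infsum_ennreal_SUP[of f]
  proof (rule SUP_least)
    fix F assume F: "F \<in> {F. finite F \<and> F \<subseteq> A \<times> B}"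
    define G where "G = fst ` F"
    define H where "H = snd ` F"
    have GH: "finite G" "finite H" "G \<subseteq> A" "H \<subseteq> B"
      using F by (auto simp: G_def H_def)
    have GH5: "F \<subseteq> G \<times> H"
      unfolding G_def H_def by force
    have "sum f F \<le> sum f (G \<times> H)"
      using GH GH5 by (intro sum_mono2) auto
    also have "\<dots> = (\<Sum>x\<in>G. \<Sum>y\<in>H. f (x, y))"
      by (simp add: sum.cartesian_product)
    also have "\<dots> \<le> (\<Sum>x\<in>G. \<Sum>\<^sub>\<infinity>y\<in>B. f (x, y))"
    proof (rule sum_mono)
      fix x assume "x \<in> G"
      show "(\<Sum>y\<in>H. f (x, y)) \<le> (\<Sum>\<^sub>\<infinity>y\<in>B. f (x, y))"
        unfolding infsum_ennreal_SUP[of "\<lambda>y. f (x, y)"]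
        by (rule SUP_upper) (use GH in auto)
    qed
    also have "\<dots> \<le> (\<Sum>\<^sub>\<infinity>x\<in>A. \<Sum>\<^sub>\<infinity>y\<in>B. f (x, y))"
      unfolding infsum_ennreal_SUP[of "\<lambda>x. \<Sum>\<^sub>\<infinity>y\<in>B. f (x, y)"]
      by (rule SUP_upper) (use GH in auto)
    finally show "sum f F \<le> (\<Sum>\<^sub>\<infinity>x\<in>A. \<Sum>\<^sub>\<infinity>y\<in>B. f (x, y))" .
  qed
next
  show "(\<Sum>\<^sub>\<infinity>x\<in>A. \<Sum>\<^sub>\<infinity>y\<in>B. f (x, y)) \<le> (\<Sum>\<^sub>\<infinity>z\<in>A \<times> B. f z)"
    unfolding infsum_ennreal_SUP[of "\<lambda>x. \<Sum>\<^sub>\<infinity>y\<in>B. f (x, y)"]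
  proof (rule SUP_least)
    fix G assume G: "G \<in> {F. finite F \<and> F \<subseteq> A}"
    have "(\<Sum>x\<in>G. \<Sum>\<^sub>\<infinity>y\<in>B. f (x, y))
        = (\<Sum>x\<in>G. SUP H\<in>{H. finite H \<and> H \<subseteq> B}. \<Sum>y\<in>H. f (x, y))"
      by (simp add: infsum_ennreal_SUP)
    also have "\<dots> \<le> (SUP H\<in>{H. finite H \<and> H \<subseteq> B}. \<Sum>x\<in>G. \<Sum>y\<in>H. f (x, y))"
      using G by (intro sum_SUP_directed_ennreal) auto
    also have "\<dots> \<le> (\<Sum>\<^sub>\<infinity>z\<in>A \<times> B. f z)"
    proof (rule SUP_least)
      fix H assume H: "H \<in> {H. finite H \<and> H \<subseteq> B}"
      have "(\<Sum>x\<in>G. \<Sum>y\<in>H. f (x, y)) = sum f (G \<times> H)"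
        by (simp add: sum.cartesian_product)
      also have "\<dots> \<le> (\<Sum>\<^sub>\<infinity>z\<in>A \<times> B. f z)"
        unfolding infsum_ennreal_SUP[of f]
        by (rule SUP_upper) (use G H in auto)
      finally show "(\<Sum>x\<in>G. \<Sum>y\<in>H. f (x, y)) \<le> (\<Sum>\<^sub>\<infinity>z\<in>A \<times> B. f z)" .
    qed
    finally show "(\<Sum>x\<in>G. \<Sum>\<^sub>\<infinity>y\<in>B. f (x, y)) \<le> (\<Sum>\<^sub>\<infinity>z\<in>A \<times> B. f z)" .
  qed
qed

lemma infsum_UNIV_pair_ennreal:
  fixes f :: "'a \<Rightarrow> 'b \<Rightarrow> ennreal"
  shows "(\<Sum>\<^sub>\<infinity>(x, y)\<in>UNIV. f x y) = (\<Sum>\<^sub>\<infinity>x\<in>UNIV. \<Sum>\<^sub>\<infinity>y\<in>UNIV. f x y)"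
  using infsum_Sigma_ennreal[of "\<lambda>(x,y). f x y" UNIV UNIV] by simp

lemma infsum_swap_ennreal:
  fixes f :: "'a \<Rightarrow> 'b \<Rightarrow> ennreal"
  shows "(\<Sum>\<^sub>\<infinity>x\<in>A. \<Sum>\<^sub>\<infinity>y\<in>B. f x y) = (\<Sum>\<^sub>\<infinity>y\<in>B. \<Sum>\<^sub>\<infinity>x\<in>A. f x y)"
proof -
  have "(\<Sum>\<^sub>\<infinity>x\<in>A. \<Sum>\<^sub>\<infinity>y\<in>B. f x y) = (\<Sum>\<^sub>\<infinity>z\<in>A \<times> B. f (fst z) (snd z))"
    using infsum_Sigma_ennreal[of "\<lambda>z. f (fst z) (snd z)" A B] by simp
  also have "\<dots> = (\<Sum>\<^sub>\<infinity>z\<in>B \<times> A. f (snd z) (fst z))"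
  proof -
    have "B \<times> A = prod.swap ` (A \<times> B)" by auto
    moreover have "inj_on prod.swap (A \<times> B)" by auto
    ultimately show ?thesis by (simp add: infsum_reindex o_def)
  qed
  also have "\<dots> = (\<Sum>\<^sub>\<infinity>y\<in>B. \<Sum>\<^sub>\<infinity>x\<in>A. f x y)"
    using infsum_Sigma_ennreal[of "\<lambda>z. f (snd z) (fst z)" B A] by simp
  finally show ?thesis .
qed

lemma infsum_ennreal_real:
  fixes f :: "'a \<Rightarrow> real"
  assumes "f summable_on A" "\<And>x. x \<in> A \<Longrightarrow> f x \<ge> 0"
  shows "(\<Sum>\<^sub>\<infinity>x\<in>A. ennreal (f x)) = ennreal (\<Sum>\<^sub>\<infinity>x\<in>A. f x)"
proof -
  have "\<And>F. \<lbrakk>finite F; F \<subseteq> A\<rbrakk> \<Longrightarrow> sum (ennreal \<circ> f) F = ennreal (sum f F)"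
    by (metis (mono_tags, lifting) comp_def assms(2) subsetD sum.cong sum_ennreal)
  then have "infsum (ennreal \<circ> f) A = ennreal (infsum f A)"
    by (simp add: infsum_comm_additive_general assms(1))
  then show ?thesis by (simp add: o_def)
qed

lemma summable_from_ennreal:
  fixes f :: "'a \<Rightarrow> real"
  assumes "(\<Sum>\<^sub>\<infinity>x\<in>A. ennreal (f x)) < \<infinity>" "\<And>x. x \<in> A \<Longrightarrow> f x \<ge> 0"
  shows "f summable_on A"
proof (rule nonneg_bdd_above_summable_on)
  show "\<And>x. x \<in> A \<Longrightarrow> 0 \<le> f x" by fact
  let ?S = "(\<Sum>\<^sub>\<infinity>x\<in>A. ennreal (f x))"
  show "bdd_above (sum f ` {F. F \<subseteq> A \<and> finite F})"
  proof (rule bdd_aboveI)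
    fix s assume "s \<in> sum f ` {F. F \<subseteq> A \<and> finite F}"
    then obtain F where F: "F \<subseteq> A" "finite F" "s = sum f F" by auto
    have "ennreal (sum f F) = (\<Sum>x\<in>F. ennreal (f x))"
      using F assms(2) by (subst sum_ennreal[symmetric]) auto
    also have "\<dots> \<le> (SUP F\<in>{F. finite F \<and> F\<subseteq>A}. sum (\<lambda>x. ennreal (f x)) F)"
      by (rule SUP_upper) (use F in auto)
    also have "\<dots> = ?S"
      by (rule nonneg_infsum_complete[symmetric]) simp
    finally have "ennreal s \<le> ?S" using F by simp
    then show "s \<le> enn2real ?S"
    proof -
      have "enn2real (ennreal s) \<le> enn2real ?S"
        using \<open>ennreal s \<le> ?S\<close> assms(1) by (intro enn2real_mono) auto
      moreover have "s \<ge> 0" using F assms(2) by (auto intro: sum_nonneg)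
      ultimately show ?thesis by simp
    qed
  qed
qed

lemma geometric_ennreal_finite: "(\<Sum>\<^sub>\<infinity>n\<in>(UNIV::nat set). ennreal ((1/2)^n)) < \<infinity>"
proof -
  have "(\<lambda>n::nat. (1/2::real)^n) summable_on UNIV"
    by (subst summable_on_UNIV_nonneg_real_iff) (auto intro: summable_geometric)
  then show ?thesis by (subst infsum_ennreal_real) auto
qed

lemma countable_weight:
  assumes "countable (UNIV :: 'a set)"
  shows "\<exists>g :: 'a \<Rightarrow> real. (\<forall>x. g x > 0) \<and> (\<Sum>\<^sub>\<infinity>x\<in>UNIV. ennreal (g x)) < \<infinity>"
proof -
  define t where "t = to_nat_on (UNIV :: 'a set)"
  have inj: "inj t" using assms unfolding t_def by (rule inj_on_to_nat_on)
  define g where "g x = (1/2::real) ^ t x" for x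
  have "(\<Sum>\<^sub>\<infinity>x\<in>UNIV. ennreal (g x)) = (\<Sum>\<^sub>\<infinity>n\<in>range t. ennreal ((1/2)^n))"
    using inj by (simp add: infsum_reindex g_def o_def)
  also have "\<dots> \<le> (\<Sum>\<^sub>\<infinity>n\<in>UNIV. ennreal ((1/2)^n))"
    by (rule infsum_subset_le_ennreal) auto
  also have "\<dots> < \<infinity>" by (rule geometric_ennreal_finite)
  finally show ?thesis by (intro exI[of _ g]) (auto simp: g_def)
qed




definition Sb :: "('x \<Rightarrow> 'x \<Rightarrow> real) \<Rightarrow> real \<Rightarrow> ('x \<Rightarrow> real) \<Rightarrow> ennreal" where
  "Sb b p f = (\<Sum>\<^sub>\<infinity>(x, y)\<in>UNIV. ennreal (b x y * \<bar>f x - f y\<bar> powr p))"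

lemma energy0: "energy b (\<lambda>_. 0) p f = ennreal (1/2) * Sb b p f"
  unfolding energy_def Sb_def by (simp add: divide_ennreal_def mult.commute)

lemma half_le: "ennreal (1/2) * (x::ennreal) \<le> x"
proof -
  have "ennreal (1/2) \<le> ennreal 1" by (rule ennreal_leI) simp
  then have "ennreal (1/2) * x \<le> ennreal 1 * x" by (rule mult_right_mono) simp
  then show ?thesis by simp
qed

lemma half_fin: "ennreal (1/2) * (x::ennreal) < \<infinity> \<longleftrightarrow> x < \<infinity>"
  using ennreal_less_top[of "1/2"] by (auto simp: ennreal_mult_less_top)

lemma Dp0: "f \<in> Dp b (\<lambda>_. 0) p \<longleftrightarrow> Sb b p f < \<infinity>"
  unfolding Dp_def mem_Collect_eq energy0 by (rule half_fin)

lemma liminf_finite: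
  assumes "liminf_inf f = \<infinity>"
  shows "finite {x. f x \<le> C}"
proof -
  have "ereal C < liminf_inf f" using assms by simp
  then obtain K where K: "finite K" "ereal C < (INF x\<in>-K. ereal (f x))"
    unfolding liminf_inf_def less_SUP_iff by auto
  have "{x. f x \<le> C} \<subseteq> K"
  proof
    fix x assume x: "x \<in> {x. f x \<le> C}"
    show "x \<in> K"
    proof (rule ccontr)
      assume "x \<notin> K"
      then have "(INF x\<in>-K. ereal (f x)) \<le> ereal (f x)" by (intro INF_lower) auto
      with K(2) have "ereal C < ereal (f x)" by (rule less_le_trans)
      with x show False by simp
    qed
  qed
  then show ?thesis using K(1) by (rule finite_subset)
qed

lemma finite_liminf:
  assumes "\<And>C. finite {x. f x \<le> C}"
  shows "liminf_inf f = \<infinity>"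
  unfolding liminf_inf_def
proof (rule ereal_top)
  fix B
  have "ereal B \<le> (INF x\<in>-{x. f x \<le> B}. ereal (f x))"
    by (rule INF_greatest) auto
  also have "\<dots> \<le> (SUP K\<in>{K. finite K}. INF x\<in>-K. ereal (f x))"
    by (rule SUP_upper) (use assms in auto)
  finally show "ereal B \<le> (SUP K\<in>{K. finite K}. INF x\<in>-K. ereal (f x))" .
qed

locale wg =
  fixes b :: "'x \<Rightarrow> 'x \<Rightarrow> real" and m :: "'x \<Rightarrow> real" and p :: real
  assumes wg: "weighted_graph b m (\<lambda>_. 0)" and p1: "p \<ge> 1"
begin

lemma b_sym: "b x y = b y x" and b_nn: "b x y \<ge> 0" and b_diag: "b x x = 0"
  and b_summ: "(\<lambda>y. b x y) summable_on UNIV"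
  and cntbl: "countable (UNIV :: 'x set)" and infin: "infinite (UNIV :: 'x set)"
  and conn: "(\<lambda>u v. b u v > 0)\<^sup>*\<^sup>* x y"
  using wg unfolding weighted_graph_def by blast+

lemma p0: "p > 0" using p1 by simp

lemma Sb_contract:
  assumes L: "L \<ge> 0" and g: "\<And>x y. \<bar>g x - g y\<bar> \<le> L * \<bar>f x - f y\<bar>"
  shows "Sb b p g \<le> ennreal (L powr p) * Sb b p f"
  unfolding Sb_def infsum_cmult_ennreal[symmetric]
proof (rule infsum_mono_ennreal)
  fix z :: "'x \<times> 'x"
  obtain x y where z: "z = (x, y)" by (cases z)
  have "\<bar>g x - g y\<bar> powr p \<le> (L * \<bar>f x - f y\<bar>) powr p"
    using g p0 by (intro powr_mono2) auto
  also have "\<dots> = L powr p * \<bar>f x - f y\<bar> powr p" using L by (simp add: powr_mult)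
  finally have "b x y * \<bar>g x - g y\<bar> powr p \<le> b x y * (L powr p * \<bar>f x - f y\<bar> powr p)"
    using b_nn[of x y] by (rule mult_left_mono)
  then have "b x y * \<bar>g x - g y\<bar> powr p \<le> L powr p * (b x y * \<bar>f x - f y\<bar> powr p)"
    by (simp add: mult.left_commute)
  then have "ennreal (b x y * \<bar>g x - g y\<bar> powr p) \<le> ennreal (L powr p * (b x y * \<bar>f x - f y\<bar> powr p))"
    by (rule ennreal_leI)
  also have "\<dots> = ennreal (L powr p) * ennreal (b x y * \<bar>f x - f y\<bar> powr p)"
    by (rule ennreal_mult') simp
  finally show "(case z of (x, y) \<Rightarrow> ennreal (b x y * \<bar>g x - g y\<bar> powr p))
      \<le> ennreal (L powr p) * (case z of (x, y) \<Rightarrow> ennreal (b x y * \<bar>f x - f y\<bar> powr p))"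
    using z by simp
qed

lemma parabolic_if:
  assumes H: "\<And>K e. finite K \<Longrightarrow> e > 0 \<Longrightarrow>
     \<exists>v. Sb b p v < ennreal e \<and> (\<forall>x\<in>K. 1 \<le> v x) \<and> finite {x. 0 < v x}"
  shows "p_parabolic b (\<lambda>_. 0) p"
  unfolding p_parabolic_def
proof (intro allI impI)
  fix K :: "'x set" assume K: "finite K"
  have "capp b (\<lambda>_. 0) p K \<le> 0"
  proof (rule ennreal_le_epsilon)
    fix e :: real assume e: "e > 0"
    obtain v where v: "Sb b p v < ennreal e" "\<forall>x\<in>K. 1 \<le> v x" "finite {x. 0 < v x}"
      using H[OF K e] by blast
    define \<phi> where "\<phi> x = min 1 (max 0 (v x))" for x
    have "finite {x. \<phi> x \<noteq> 0}"
      by (rule finite_subset[OF _ v(3)]) (auto simp: \<phi>_def)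
    moreover have "\<forall>x\<in>K. \<phi> x \<ge> 1" using v(2) by (auto simp: \<phi>_def)
    ultimately have "capp b (\<lambda>_. 0) p K \<le> energy b (\<lambda>_. 0) p \<phi>"
      unfolding capp_def by (intro INF_lower) auto
    also have "\<dots> \<le> Sb b p \<phi>" unfolding energy0 by (rule half_le)
    also have "\<dots> \<le> ennreal (1 powr p) * Sb b p v"
      by (rule Sb_contract) (auto simp: \<phi>_def)
    also have "\<dots> < ennreal e" using v(1) by simp
    finally show "capp b (\<lambda>_. 0) p K \<le> 0 + ennreal e" by simp
  qed
  then show "capp b (\<lambda>_. 0) p K = 0" by simp
qed

lemma iii_i:
  assumes "f \<in> Dp b (\<lambda>_. 0) p" "liminf_inf f = \<infinity>"
  shows "p_parabolic b (\<lambda>_. 0) p"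
proof (rule parabolic_if)
  fix K :: "'x set" and e :: real assume K: "finite K" and e: "e > 0"
  have fin: "Sb b p f < \<infinity>" using assms(1) by (simp add: Dp0)
  define s where "s = enn2real (Sb b p f)"
  have s: "Sb b p f = ennreal s" "s \<ge> 0" using fin by (auto simp: s_def ennreal_enn2real)
  define M where "M = (\<Sum>x\<in>K. \<bar>f x\<bar>)"
  have M: "\<bar>f x\<bar> \<le> M" if "x \<in> K" for x
    unfolding M_def using K that by (intro member_le_sum) auto
  have M0: "M \<ge> 0" unfolding M_def by (auto intro: sum_nonneg)
  define n where "n = M + 1 + s / e"
  have n1: "n \<ge> 1" using M0 s e by (auto simp: n_def)
  have sn: "s / n < e"
  proof -
    have "s / e < n" using M0 by (simp add: n_def)
    then have "s < n * e" using e by (simp add: divide_less_eq)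
    then show ?thesis using n1 by (simp add: divide_less_eq mult.commute)
  qed
  define v where "v x = 2 - f x / n" for x
  have "Sb b p v \<le> ennreal ((1/n) powr p) * Sb b p f"
    by (rule Sb_contract) (use n1 in \<open>auto simp: v_def abs_minus_commute diff_divide_distrib[symmetric]\<close>)
  also have "\<dots> = ennreal ((1/n) powr p * s)" using s by (simp add: ennreal_mult')
  also have "\<dots> < ennreal e"
  proof (rule ennreal_lessI[OF e])
    have "(1/n) powr p \<le> (1/n) powr 1"
      using n1 p1 by (intro powr_mono') auto
    then have "(1/n) powr p * s \<le> (1/n) * s" using s n1 by (intro mult_right_mono) auto
    with sn show "(1/n) powr p * s < e" by simp
  qed
  finally have 1: "Sb b p v < ennreal e" .
  have 2: "\<forall>x\<in>K. 1 \<le> v x"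
  proof
    fix x assume "x \<in> K"
    moreover have "s / e \<ge> 0" using s e by simp
    ultimately have "f x \<le> n" using M[of x] M0 by (auto simp: n_def)
    then have "f x / n \<le> 1" using n1 by simp
    then show "1 \<le> v x" by (simp add: v_def)
  qed
  have "{x. 0 < v x} \<subseteq> {x. f x \<le> 2 * n}"
    using n1 by (auto simp: v_def field_simps)
  then have 3: "finite {x. 0 < v x}" using liminf_finite[OF assms(2)] by (rule finite_subset)
  show "\<exists>v. Sb b p v < ennreal e \<and> (\<forall>x\<in>K. 1 \<le> v x) \<and> finite {x. 0 < v x}"
    using 1 2 3 by blast
qed

end



lemma Max_diff_powr:
  fixes a c :: "'i \<Rightarrow> real"
  assumes I: "finite I" "I \<noteq> {}" and p: "p > 0"
  shows "\<bar>Max (a ` I) - Max (c ` I)\<bar> powr p \<le> (\<Sum>i\<in>I. \<bar>a i - c i\<bar> powr p)"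
proof -
  have "Max (a ` I) \<in> a ` I" using I by (intro Max_in) auto
  then obtain j where j: "j \<in> I" "Max (a ` I) = a j" by auto
  have "Max (c ` I) \<in> c ` I" using I by (intro Max_in) auto
  then obtain k where k: "k \<in> I" "Max (c ` I) = c k" by auto
  have cj: "c j \<le> Max (c ` I)" using I j by auto
  have ak: "a k \<le> Max (a ` I)" using I k by auto
  show ?thesis
  proof (cases "Max (a ` I) \<ge> Max (c ` I)")
    case True
    then have "\<bar>Max (a ` I) - Max (c ` I)\<bar> \<le> \<bar>a j - c j\<bar>" using j cj by auto
    then have "\<bar>Max (a ` I) - Max (c ` I)\<bar> powr p \<le> \<bar>a j - c j\<bar> powr p"
      using p by (intro powr_mono2) auto
    also have "\<dots> \<le> (\<Sum>i\<in>I. \<bar>a i - c i\<bar> powr p)"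
      using I j by (intro member_le_sum) auto
    finally show ?thesis .
  next
    case False
    then have "\<bar>Max (a ` I) - Max (c ` I)\<bar> \<le> \<bar>a k - c k\<bar>" using k ak by auto
    then have "\<bar>Max (a ` I) - Max (c ` I)\<bar> powr p \<le> \<bar>a k - c k\<bar> powr p"
      using p by (intro powr_mono2) auto
    also have "\<dots> \<le> (\<Sum>i\<in>I. \<bar>a i - c i\<bar> powr p)"
      using I k by (intro member_le_sum) auto
    finally show ?thesis .
  qed
qed

context wg begin

lemma parabolic_D:
  assumes par: "p_parabolic b (\<lambda>_. 0) p" and K: "finite K" and e: "e > 0"
  shows "\<exists>\<phi>. finite {x. \<phi> x \<noteq> 0} \<and> (\<forall>x\<in>K. 1 \<le> \<phi> x) \<and> Sb b p \<phi> < ennreal e"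
proof -
  have "capp b (\<lambda>_. 0) p K < ennreal (e/2)" using par K e unfolding p_parabolic_def by auto
  then obtain \<phi> where \<phi>: "finite {x. \<phi> x \<noteq> 0}" "\<forall>x\<in>K. 1 \<le> \<phi> x"
      "energy b (\<lambda>_. 0) p \<phi> < ennreal (e/2)"
    unfolding capp_def INF_less_iff by auto
  have "Sb b p \<phi> < ennreal e"
  proof (cases "Sb b p \<phi>" rule: ennreal_cases)
    case (real s)
    have "energy b (\<lambda>_. 0) p \<phi> = ennreal (1/2) * ennreal s" by (simp only: energy0 real)
    also have "\<dots> = ennreal (1/2 * s)" by (rule ennreal_mult'[symmetric]) simp
    finally have eq: "energy b (\<lambda>_. 0) p \<phi> = ennreal (1/2 * s)" .
    have "ennreal (1/2 * s) < ennreal (e/2)" using \<phi>(3) eq by metis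
    then have "1/2 * s < e/2" using e real by (simp add: ennreal_less_iff)
    then show ?thesis using real e by (simp add: ennreal_lessI)
  next
    case top
    then show ?thesis using \<phi>(3) by (simp add: energy0 ennreal_mult_top)
  qed
  with \<phi> show ?thesis by blast
qed

lemma i_iii:
  assumes par: "p_parabolic b (\<lambda>_. 0) p"
  shows "\<exists>f\<in>Dp b (\<lambda>_. 0) p. liminf_inf f = \<infinity>"
proof -
  define e where "e = from_nat_into (UNIV :: 'x set)"
  have esurj: "\<exists>n. e n = x" for x using from_nat_into_surj[OF cntbl] by (simp add: e_def)
  define N where "N x = (SOME n. e n = x)" for x
  have eN: "e (N x) = x" for x unfolding N_def using esurj[of x] by (rule someI_ex)
  define K where "K n = e ` {..n}" for n
  have inK: "x \<in> K n" if "N x \<le> n" for x n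
    unfolding K_def using that eN[of x] by force
  have finK: "finite (K n)" for n by (simp add: K_def)
  define eps where "eps n = (1/2::real)^n / (real n + 1) powr p" for n :: nat
  have eps_pos: "eps n > 0" for n by (simp add: eps_def)
  have "\<forall>n. \<exists>\<phi>. finite {x. \<phi> x \<noteq> 0} \<and> (\<forall>x\<in>K n. 1 \<le> \<phi> x) \<and> Sb b p \<phi> < ennreal (eps n)"
    using parabolic_D[OF par finK eps_pos] by blast
  then obtain \<Phi> where \<Phi>: "\<And>n. finite {x. \<Phi> n x \<noteq> 0}" "\<And>n x. x \<in> K n \<Longrightarrow> 1 \<le> \<Phi> n x"
      "\<And>n. Sb b p (\<Phi> n) < ennreal (eps n)"
    by metis
  define \<psi> where "\<psi> n x = 1 - min 1 (max 0 (\<Phi> n x))" for n x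
  have \<psi>K: "\<psi> n x = 0" if "x \<in> K n" for n x using \<Phi>(2)[OF that] by (simp add: \<psi>_def)
  have \<psi>1: "\<Phi> n x \<noteq> 0" if "\<psi> n x \<noteq> 1" for n x using that by (auto simp: \<psi>_def)
  have \<psi>c: "\<bar>\<psi> n x - \<psi> n y\<bar> \<le> \<bar>\<Phi> n x - \<Phi> n y\<bar>" for n x y by (auto simp: \<psi>_def)
  define a where "a n x = real n * \<psi> n x" for n x
  define F where "F M x = Max ((\<lambda>n. a n x) ` {..M})" for M x
  define f where "f x = F (N x) x" for x
  have FM: "F M x = f x" if "N x \<le> M" for M x
  proof (rule antisym)
    show "F M x \<le> f x"
      unfolding F_def f_def
    proof (subst Max_le_iff, simp, simp, intro ballI)
      fix t assume "t \<in> (\<lambda>n. a n x) ` {..M}"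
      then obtain n where n: "n \<le> M" "t = a n x" by auto
      show "t \<le> Max ((\<lambda>n. a n x) ` {..N x})"
      proof (cases "n \<le> N x")
        case True
        then show ?thesis using n by (intro Max_ge) auto
      next
        case False
        then have "t = 0" using n \<psi>K[OF inK[of x n]] by (simp add: a_def)
        also have "0 = a 0 x" by (simp add: a_def)
        also have "\<dots> \<le> Max ((\<lambda>n. a n x) ` {..N x})" by (intro Max_ge) auto
        finally show ?thesis .
      qed
    qed
  next
    show "f x \<le> F M x"
      unfolding F_def f_def using that by (intro Max_mono) auto
  qed
  have diff: "\<bar>f x - f y\<bar> powr p \<le> (\<Sum>n\<le>max (N x) (N y). \<bar>a n x - a n y\<bar> powr p)" for x y
  proof -
    let ?M = "max (N x) (N y)"
    have "f x = F ?M x" "f y = F ?M y" using FM by auto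
    then show ?thesis unfolding F_def using Max_diff_powr[of "{..?M}" p] p0 by auto
  qed
  have aeq: "\<bar>a n x - a n y\<bar> \<le> real n * \<bar>\<Phi> n x - \<Phi> n y\<bar>" for n x y
  proof -
    have "\<bar>a n x - a n y\<bar> = real n * \<bar>\<psi> n x - \<psi> n y\<bar>"
      by (simp add: a_def abs_mult right_diff_distrib[symmetric])
    also have "\<dots> \<le> real n * \<bar>\<Phi> n x - \<Phi> n y\<bar>" by (intro mult_left_mono \<psi>c) auto
    finally show ?thesis .
  qed
  have "Sb b p f \<le> (\<Sum>\<^sub>\<infinity>(x, y)\<in>UNIV. \<Sum>\<^sub>\<infinity>n\<in>UNIV. ennreal (b x y * \<bar>a n x - a n y\<bar> powr p))"
    unfolding Sb_def
  proof (rule infsum_mono_ennreal)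
    fix z :: "'x \<times> 'x"
    obtain x y where z: "z = (x, y)" by (cases z)
    let ?M = "max (N x) (N y)"
    have "b x y * \<bar>f x - f y\<bar> powr p \<le> b x y * (\<Sum>n\<le>?M. \<bar>a n x - a n y\<bar> powr p)"
      using diff b_nn by (intro mult_left_mono) auto
    then have "ennreal (b x y * \<bar>f x - f y\<bar> powr p)
        \<le> ennreal (\<Sum>n\<le>?M. b x y * \<bar>a n x - a n y\<bar> powr p)"
      by (intro ennreal_leI) (simp add: sum_distrib_left)
    also have "\<dots> = (\<Sum>n\<le>?M. ennreal (b x y * \<bar>a n x - a n y\<bar> powr p))"
      using b_nn by (intro sum_ennreal[symmetric]) auto
    also have "\<dots> = (\<Sum>\<^sub>\<infinity>n\<in>{..?M}. ennreal (b x y * \<bar>a n x - a n y\<bar> powr p))"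
      by simp
    also have "\<dots> \<le> (\<Sum>\<^sub>\<infinity>n\<in>UNIV. ennreal (b x y * \<bar>a n x - a n y\<bar> powr p))"
      by (rule infsum_subset_le_ennreal) auto
    finally show "(case z of (x, y) \<Rightarrow> ennreal (b x y * \<bar>f x - f y\<bar> powr p))
       \<le> (case z of (x, y) \<Rightarrow> \<Sum>\<^sub>\<infinity>n\<in>UNIV. ennreal (b x y * \<bar>a n x - a n y\<bar> powr p))"
      using z by simp
  qed
  also have "\<dots> = (\<Sum>\<^sub>\<infinity>n\<in>UNIV. Sb b p (a n))"
    unfolding Sb_def
    using infsum_swap_ennreal[of "\<lambda>z n. case z of (x, y) \<Rightarrow> ennreal (b x y * \<bar>a n x - a n y\<bar> powr p)" UNIV UNIV]
    by (simp add: case_prod_unfold)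
  also have "\<dots> \<le> (\<Sum>\<^sub>\<infinity>n\<in>UNIV. ennreal ((1/2)^n))"
  proof (rule infsum_mono_ennreal)
    fix n :: nat
    have "Sb b p (a n) \<le> ennreal (real n powr p) * Sb b p (\<Phi> n)"
      by (rule Sb_contract) (auto intro: aeq)
    also have "\<dots> \<le> ennreal (real n powr p) * ennreal (eps n)"
      using \<Phi>(3)[of n] by (intro mult_left_mono) auto
    also have "\<dots> = ennreal (real n powr p * eps n)" by (simp add: ennreal_mult')
    also have "\<dots> \<le> ennreal ((1/2)^n)"
    proof (rule ennreal_leI)
      have "real n powr p \<le> (real n + 1) powr p" using p0 by (intro powr_mono2) auto
      moreover have "(real n + 1) powr p > 0" by simp
      ultimately have "real n powr p / (real n + 1) powr p \<le> 1" by simp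
      then have "(1/2)^n * (real n powr p / (real n + 1) powr p) \<le> (1/2::real)^n * 1"
        by (intro mult_left_mono) auto
      then show "real n powr p * eps n \<le> (1/2)^n" by (simp add: eps_def field_simps)
    qed
    finally show "Sb b p (a n) \<le> ennreal ((1/2)^n)" .
  qed
  also have "\<dots> < \<infinity>" by (rule geometric_ennreal_finite)
  finally have fD: "f \<in> Dp b (\<lambda>_. 0) p" by (simp add: Dp0)
  have "liminf_inf f = \<infinity>"
  proof (rule finite_liminf)
    fix C :: real
    define n0 where "n0 = nat \<lceil>C\<rceil> + 1"
    have n0C: "real n0 > C" unfolding n0_def by linarith
    have "{x. f x \<le> C} \<subseteq> {x. \<Phi> n0 x \<noteq> 0}"
    proof (rule subsetI, rule ccontr)
      fix x assume x: "x \<in> {x. f x \<le> C}" and nx: "x \<notin> {x. \<Phi> n0 x \<noteq> 0}"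
      then have \<psi>x: "\<psi> n0 x = 1" using \<psi>1 by blast
      have "n0 \<le> N x"
      proof (rule ccontr)
        assume "\<not> n0 \<le> N x"
        then have "\<psi> n0 x = 0" using \<psi>K inK by simp
        with \<psi>x show False by simp
      qed
      then have "a n0 x \<le> f x" unfolding f_def F_def by (intro Max_ge) auto
      then have "real n0 \<le> f x" using \<psi>x by (simp add: a_def)
      with x n0C show False by simp
    qed
    then show "finite {x. f x \<le> C}" using \<Phi>(1)[of n0] by (rule finite_subset)
  qed
  with fD show ?thesis by blast
qed

end



lemma sum3_powr:
  fixes u v w p :: real
  assumes "u \<ge> 0" "v \<ge> 0" "w \<ge> 0" "p > 0"
  shows "(u + v + w) powr p \<le> 3 powr p * (u powr p + v powr p + w powr p)"
proof -
  define M where "M = max u (max v w)"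
  have M0: "M \<ge> 0" using assms by (simp add: M_def)
  have "(u + v + w) powr p \<le> (3 * M) powr p"
    using assms by (intro powr_mono2) (auto simp: M_def)
  also have "\<dots> = 3 powr p * M powr p" using M0 by (simp add: powr_mult)
  also have "M powr p \<le> u powr p + v powr p + w powr p"
    unfolding M_def using assms by (auto simp: max_def)
  then have "3 powr p * M powr p \<le> 3 powr p * (u powr p + v powr p + w powr p)"
    by (intro mult_left_mono) auto
  finally show ?thesis .
qed

context wg begin

lemma iii_iv:
  assumes fD: "f \<in> Dp b (\<lambda>_. 0) p" and lim: "liminf_inf f = \<infinity>"
  shows "\<exists>\<sigma> \<mu>. is_metric \<sigma> \<and> finite_measure_fn \<mu> \<and> p_intrinsic b p \<sigma> \<mu> \<and>
            induces_discrete \<sigma> \<and> (\<forall>x r. r \<ge> 0 \<longrightarrow> finite {y. \<sigma> x y \<le> r})"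
proof -
  obtain g :: "'x \<Rightarrow> real" where g: "\<And>x. g x > 0" "(\<Sum>\<^sub>\<infinity>x\<in>UNIV. ennreal (g x)) < \<infinity>"
    using countable_weight[OF cntbl] by blast
  define deg where "deg x = (\<Sum>\<^sub>\<infinity>y\<in>UNIV. b x y)" for x
  have deg0: "deg x \<ge> 0" for x unfolding deg_def by (intro infsum_nonneg) (auto simp: b_nn)
  have degE: "(\<Sum>\<^sub>\<infinity>y\<in>UNIV. ennreal (b x y)) = ennreal (deg x)" for x
    unfolding deg_def by (rule infsum_ennreal_real) (auto simp: b_summ b_nn)
  define \<epsilon> where "\<epsilon> x = (g x / (1 + deg x)) powr (1/p)" for x
  have \<epsilon>0: "\<epsilon> x > 0" for x using g(1)[of x] deg0[of x] by (simp add: \<epsilon>_def)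
  have \<epsilon>p: "\<epsilon> x powr p = g x / (1 + deg x)" for x
    using g(1)[of x] deg0[of x] p0 by (simp add: \<epsilon>_def powr_powr)
  have \<epsilon>deg: "\<epsilon> x powr p * deg x \<le> g x" for x
  proof -
    have "\<epsilon> x powr p * deg x = g x * (deg x / (1 + deg x))" by (simp add: \<epsilon>p)
    also have "\<dots> \<le> g x * 1" using g(1)[of x] deg0[of x] by (intro mult_left_mono) auto
    finally show ?thesis by simp
  qed
  define \<sigma> where "\<sigma> x y = (if x = y then 0 else \<bar>f x - f y\<bar> + \<epsilon> x + \<epsilon> y)" for x y
  have \<sigma>0: "\<sigma> x y \<ge> 0" for x y using \<epsilon>0[of x] \<epsilon>0[of y] by (simp add: \<sigma>_def)
  have \<sigma>le: "\<sigma> x y \<le> \<bar>f x - f y\<bar> + \<epsilon> x + \<epsilon> y" for x y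
    using \<epsilon>0[of x] \<epsilon>0[of y] by (simp add: \<sigma>_def)
  have metric: "is_metric \<sigma>"
    unfolding is_metric_def
  proof (intro conjI allI)
    fix x y z
    show "\<sigma> x y \<ge> 0" by (rule \<sigma>0)
    show "\<sigma> x y = 0 \<longleftrightarrow> x = y" using \<epsilon>0[of x] \<epsilon>0[of y] by (auto simp: \<sigma>_def)
    show "\<sigma> x y = \<sigma> y x" by (auto simp: \<sigma>_def abs_minus_commute)
    show "\<sigma> x z \<le> \<sigma> x y + \<sigma> y z"
    proof (cases "x = z")
      case True then show ?thesis using \<sigma>0[of x y] \<sigma>0[of y z] by (simp add: \<sigma>_def)
    next
      case False
      show ?thesis
      proof (cases "x = y \<or> y = z")
        case True then show ?thesis using \<sigma>0[of x y] \<sigma>0[of y z] by (auto simp: \<sigma>_def)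
      next
        case False2: False
        have "\<bar>f x - f z\<bar> \<le> \<bar>f x - f y\<bar> + \<bar>f y - f z\<bar>" by linarith
        then show ?thesis using False False2 \<epsilon>0[of y] by (simp add: \<sigma>_def)
      qed
    qed
  qed
  have disc: "induces_discrete \<sigma>"
    unfolding induces_discrete_def
  proof
    fix x
    show "\<exists>e>0. \<forall>y. \<sigma> x y < e \<longrightarrow> y = x"
    proof (rule exI[of _ "\<epsilon> x"], intro conjI allI impI)
      show "\<epsilon> x > 0" by (rule \<epsilon>0)
      fix y assume "\<sigma> x y < \<epsilon> x"
      moreover have "y \<noteq> x \<Longrightarrow> \<sigma> x y \<ge> \<epsilon> x"
        using \<epsilon>0[of y] by (simp add: \<sigma>_def)
      ultimately show "y = x" by force
    qed
  qed
  have balls: "finite {y. \<sigma> x y \<le> r}" for x r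
  proof -
    have "{y. \<sigma> x y \<le> r} \<subseteq> insert x {y. f y \<le> f x + r}"
    proof
      fix y assume "y \<in> {y. \<sigma> x y \<le> r}"
      then have "y \<noteq> x \<Longrightarrow> \<bar>f x - f y\<bar> + \<epsilon> x + \<epsilon> y \<le> r" by (simp add: \<sigma>_def)
      then show "y \<in> insert x {y. f y \<le> f x + r}" using \<epsilon>0[of x] \<epsilon>0[of y] by force
    qed
    then show ?thesis using liminf_finite[OF lim] by (meson finite_insert finite_subset)
  qed
  define T where "T x = (\<Sum>\<^sub>\<infinity>y\<in>UNIV. ennreal (b x y * \<sigma> x y powr p))" for x
  define A where "A x y = ennreal (b x y * \<bar>f x - f y\<bar> powr p)" for x y
  define B where "B x y = ennreal (b x y * \<epsilon> x powr p)" for x y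
  define C where "C x y = ennreal (b x y * \<epsilon> y powr p)" for x y
  have pt: "ennreal (b x y * \<sigma> x y powr p) \<le> ennreal (3 powr p) * (A x y + B x y + C x y)" for x y
  proof -
    have "\<sigma> x y powr p \<le> (\<bar>f x - f y\<bar> + \<epsilon> x + \<epsilon> y) powr p"
      using \<sigma>0 \<sigma>le p0 by (intro powr_mono2) auto
    also have "\<dots> \<le> 3 powr p * (\<bar>f x - f y\<bar> powr p + \<epsilon> x powr p + \<epsilon> y powr p)"
      using \<epsilon>0[of x] \<epsilon>0[of y] p0 by (intro sum3_powr) auto
    finally have "b x y * \<sigma> x y powr p \<le> b x y * (3 powr p * (\<bar>f x - f y\<bar> powr p + \<epsilon> x powr p + \<epsilon> y powr p))"
      using b_nn by (intro mult_left_mono) auto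
    also have "\<dots> = 3 powr p * (b x y * \<bar>f x - f y\<bar> powr p + b x y * \<epsilon> x powr p + b x y * \<epsilon> y powr p)"
      by (simp add: algebra_simps)
    finally have "ennreal (b x y * \<sigma> x y powr p) \<le> ennreal (3 powr p * (b x y * \<bar>f x - f y\<bar> powr p + b x y * \<epsilon> x powr p + b x y * \<epsilon> y powr p))"
      by (rule ennreal_leI)
    also have "\<dots> = ennreal (3 powr p) * ennreal (b x y * \<bar>f x - f y\<bar> powr p + b x y * \<epsilon> x powr p + b x y * \<epsilon> y powr p)"
      by (rule ennreal_mult') simp
    also have "ennreal (b x y * \<bar>f x - f y\<bar> powr p + b x y * \<epsilon> x powr p + b x y * \<epsilon> y powr p)
       = A x y + B x y + C x y"
    proof -
      have n1: "b x y * \<bar>f x - f y\<bar> powr p \<ge> 0" "b x y * \<epsilon> x powr p \<ge> 0" "b x y * \<epsilon> y powr p \<ge> 0"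
        using b_nn[of x y] by auto
      show ?thesis unfolding A_def B_def C_def
        using ennreal_plus[OF add_nonneg_nonneg[OF n1(1) n1(2)] n1(3)] ennreal_plus[OF n1(1) n1(2)]
        by simp
    qed
    finally show ?thesis .
  qed
  have sumA: "(\<Sum>\<^sub>\<infinity>x\<in>UNIV. \<Sum>\<^sub>\<infinity>y\<in>UNIV. A x y) < \<infinity>"
  proof -
    have "(\<Sum>\<^sub>\<infinity>x\<in>UNIV. \<Sum>\<^sub>\<infinity>y\<in>UNIV. A x y) = Sb b p f"
      unfolding Sb_def A_def by (rule infsum_UNIV_pair_ennreal[symmetric])
    then show ?thesis using fD by (simp add: Dp0)
  qed
  have sumB': "(\<Sum>\<^sub>\<infinity>x\<in>UNIV. \<Sum>\<^sub>\<infinity>y\<in>UNIV. B x y) \<le> (\<Sum>\<^sub>\<infinity>x\<in>UNIV. ennreal (g x))"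
  proof (rule infsum_mono_ennreal)
    fix x
    have "(\<Sum>\<^sub>\<infinity>y\<in>UNIV. B x y) = (\<Sum>\<^sub>\<infinity>y\<in>UNIV. ennreal (\<epsilon> x powr p) * ennreal (b x y))"
      unfolding B_def by (intro infsum_cong) (simp add: ennreal_mult'' mult.commute)
    also have "\<dots> = ennreal (\<epsilon> x powr p) * ennreal (deg x)"
      by (simp add: infsum_cmult_ennreal degE)
    also have "\<dots> = ennreal (\<epsilon> x powr p * deg x)" by (simp add: ennreal_mult')
    also have "\<dots> \<le> ennreal (g x)" by (rule ennreal_leI[OF \<epsilon>deg])
    finally show "(\<Sum>\<^sub>\<infinity>y\<in>UNIV. B x y) \<le> ennreal (g x)" .
  qed
  have sumB: "(\<Sum>\<^sub>\<infinity>x\<in>UNIV. \<Sum>\<^sub>\<infinity>y\<in>UNIV. B x y) < \<infinity>"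
    using sumB' g(2) by (rule le_less_trans)
  have sumC: "(\<Sum>\<^sub>\<infinity>x\<in>UNIV. \<Sum>\<^sub>\<infinity>y\<in>UNIV. C x y) < \<infinity>"
  proof -
    have "(\<Sum>\<^sub>\<infinity>x\<in>UNIV. \<Sum>\<^sub>\<infinity>y\<in>UNIV. C x y) = (\<Sum>\<^sub>\<infinity>y\<in>UNIV. \<Sum>\<^sub>\<infinity>x\<in>UNIV. C x y)"
      by (rule infsum_swap_ennreal)
    also have "\<dots> = (\<Sum>\<^sub>\<infinity>y\<in>UNIV. \<Sum>\<^sub>\<infinity>x\<in>UNIV. B y x)"
      unfolding B_def C_def by (simp add: b_sym)
    finally show ?thesis using sumB by simp
  qed
  have totT: "(\<Sum>\<^sub>\<infinity>x\<in>UNIV. T x) < \<infinity>"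
  proof -
    have "(\<Sum>\<^sub>\<infinity>x\<in>UNIV. T x) \<le> (\<Sum>\<^sub>\<infinity>x\<in>UNIV. \<Sum>\<^sub>\<infinity>y\<in>UNIV. ennreal (3 powr p) * (A x y + B x y + C x y))"
      unfolding T_def by (intro infsum_mono_ennreal pt)
    also have "\<dots> = ennreal (3 powr p) * ((\<Sum>\<^sub>\<infinity>x\<in>UNIV. \<Sum>\<^sub>\<infinity>y\<in>UNIV. A x y)
        + (\<Sum>\<^sub>\<infinity>x\<in>UNIV. \<Sum>\<^sub>\<infinity>y\<in>UNIV. B x y) + (\<Sum>\<^sub>\<infinity>x\<in>UNIV. \<Sum>\<^sub>\<infinity>y\<in>UNIV. C x y))"
      by (simp add: infsum_cmult_ennreal infsum_add_ennreal)
    also have "\<dots> < \<infinity>"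
      using sumA sumB sumC by (simp add: ennreal_mult_less_top)
    finally show ?thesis .
  qed
  have Tfin: "T x < \<infinity>" for x
    using infsum_single_le_ennreal[of x UNIV T] totT by simp
  define \<mu> where "\<mu> x = enn2real (T x)" for x
  have \<mu>T: "ennreal (\<mu> x) = T x" for x using Tfin by (simp add: \<mu>_def ennreal_enn2real)
  have \<mu>0: "\<mu> x \<ge> 0" for x by (simp add: \<mu>_def)
  have fm: "finite_measure_fn \<mu>"
    unfolding finite_measure_fn_def
    using \<mu>0 summable_from_ennreal[of \<mu> UNIV] totT \<mu>T by auto
  have pi: "p_intrinsic b p \<sigma> \<mu>"
    unfolding p_intrinsic_def using \<sigma>0 metric \<mu>T
    by (auto simp: T_def is_metric_def)
  show ?thesis using metric fm pi disc balls by blast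
qed

end



lemma path_length_Cons2:
  "path_length w (x # y # \<gamma>) = w x y + path_length w (y # \<gamma>)"
  unfolding path_length_def
  by (simp only: length_Cons diff_Suc_1 sum.lessThan_Suc_shift nth_Cons_Suc nth_Cons_0)

lemma path_length_snoc:
  assumes "\<gamma> \<noteq> []"
  shows "path_length w (\<gamma> @ [z]) = path_length w \<gamma> + w (last \<gamma>) z"
proof -
  obtain k where k: "length \<gamma> = Suc k" using assms by (cases \<gamma>) auto
  have "path_length w (\<gamma> @ [z]) = (\<Sum>i<Suc k. w ((\<gamma> @ [z]) ! i) ((\<gamma> @ [z]) ! Suc i))"
    unfolding path_length_def using k by simp
  also have "\<dots> = (\<Sum>i<k. w ((\<gamma> @ [z]) ! i) ((\<gamma> @ [z]) ! Suc i)) + w ((\<gamma> @ [z]) ! k) ((\<gamma> @ [z]) ! Suc k)"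
    by simp
  also have "(\<Sum>i<k. w ((\<gamma> @ [z]) ! i) ((\<gamma> @ [z]) ! Suc i)) = (\<Sum>i<k. w (\<gamma> ! i) (\<gamma> ! Suc i))"
    using k by (intro sum.cong) (auto simp: nth_append)
  also have "(\<gamma> @ [z]) ! k = last \<gamma>" using k assms by (simp add: nth_append last_conv_nth)
  also have "(\<gamma> @ [z]) ! Suc k = z" using k by (simp add: nth_append)
  finally show ?thesis unfolding path_length_def using k by simp
qed

lemma is_path_snoc:
  assumes "is_path b \<gamma> x y" "b y z > 0"
  shows "is_path b (\<gamma> @ [z]) x z"
  unfolding is_path_def
proof (intro conjI allI impI)
  have ne: "\<gamma> \<noteq> []" and h: "hd \<gamma> = x" and l: "last \<gamma> = y"
    and e: "\<And>i. Suc i < length \<gamma> \<Longrightarrow> b (\<gamma> ! i) (\<gamma> ! Suc i) > 0"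
    using assms(1) unfolding is_path_def by auto
  show "\<gamma> @ [z] \<noteq> []" by simp
  show "hd (\<gamma> @ [z]) = x" using ne h by simp
  show "last (\<gamma> @ [z]) = z" by simp
  fix i assume i: "Suc i < length (\<gamma> @ [z])"
  show "b ((\<gamma> @ [z]) ! i) ((\<gamma> @ [z]) ! Suc i) > 0"
  proof (cases "Suc i < length \<gamma>")
    case True then show ?thesis using e[OF True] by (simp add: nth_append)
  next
    case False
    then have "Suc i = length \<gamma>" using i by simp
    then have i: "i = length \<gamma> - 1" by simp
    have "(\<gamma> @ [z]) ! i = y" "(\<gamma> @ [z]) ! Suc i = z"
      using ne l i \<open>Suc i = length \<gamma>\<close> by (auto simp: nth_append last_conv_nth)
    then show ?thesis using assms(2) by simp
  qed
qed

lemma is_path_Cons_D: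
  assumes "is_path b (x # y # \<gamma>) x' z"
  shows "x' = x" "b x y > 0" "is_path b (y # \<gamma>) y z"
proof -
  show "x' = x" using assms by (simp add: is_path_def)
  show "b x y > 0" using assms unfolding is_path_def by (metis length_Cons nth_Cons_0 nth_Cons_Suc zero_less_Suc Suc_mono)
  show "is_path b (y # \<gamma>) y z"
    unfolding is_path_def
  proof (intro conjI allI impI)
    show "last (y # \<gamma>) = z" using assms by (simp add: is_path_def)
    fix i assume "Suc i < length (y # \<gamma>)"
    then have "Suc (Suc i) < length (x # y # \<gamma>)" by simp
    then have "b ((x # y # \<gamma>) ! Suc i) ((x # y # \<gamma>) ! Suc (Suc i)) > 0"
      using assms unfolding is_path_def by blast
    then show "b ((y # \<gamma>) ! i) ((y # \<gamma>) ! Suc i) > 0" by simp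
  qed auto
qed

lemma metric_le_path_length:
  assumes "is_metric \<sigma>"
  shows "is_path b \<gamma> x y \<Longrightarrow> \<sigma> x y \<le> path_length \<sigma> \<gamma>"
proof (induction \<gamma> arbitrary: x)
  case Nil
  then show ?case by (simp add: is_path_def)
next
  case (Cons a \<gamma>)
  show ?case
  proof (cases \<gamma>)
    case Nil
    then have "x = a" "y = a" using Cons.prems by (auto simp: is_path_def)
    moreover have "\<sigma> a a = 0" using assms by (simp add: is_metric_def)
    ultimately show ?thesis using Nil by (simp add: path_length_def)
  next
    case (Cons c \<delta>)
    have xa: "x = a" and pth: "is_path b \<gamma> c y"
      using is_path_Cons_D[of b a c \<delta> x y] Cons.prems Cons by auto
    have "\<sigma> x y \<le> \<sigma> x c + \<sigma> c y" using assms unfolding is_metric_def by blast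
    also have "\<dots> \<le> \<sigma> x c + path_length \<sigma> \<gamma>" using Cons.IH[OF pth] by simp
    also have "\<dots> = path_length \<sigma> (a # \<gamma>)" using Cons xa by (simp add: path_length_Cons2)
    finally show ?thesis .
  qed
qed

context wg begin

lemma path_exists: "\<exists>\<gamma>. is_path b \<gamma> x y"
proof -
  have "(\<lambda>u v. b u v > 0)\<^sup>*\<^sup>* x y" by (rule conn)
  then show ?thesis
  proof (induction rule: rtranclp_induct)
    case base
    show ?case by (rule exI[of _ "[x]"]) (simp add: is_path_def)
  next
    case (step y z)
    then obtain \<gamma> where "is_path b \<gamma> x y" by blast
    then have "is_path b (\<gamma> @ [z]) x z" using step(2) by (rule is_path_snoc)
    then show ?case by blast
  qed
qed

lemma path_length_nonneg:
  assumes "\<And>x y. w x y \<ge> 0" shows "path_length w \<gamma> \<ge> 0"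
  unfolding path_length_def using assms by (intro sum_nonneg) auto

lemma path_dist_le:
  assumes w: "\<And>x y. w x y \<ge> 0" and "is_path b \<gamma> x y"
  shows "path_dist b w x y \<le> path_length w \<gamma>"
  unfolding path_dist_def
  by (rule cInf_lower) (use assms path_length_nonneg[OF w] in \<open>auto intro!: bdd_belowI[of _ 0]\<close>)

lemma path_dist_ge:
  assumes "\<And>\<gamma>. is_path b \<gamma> x y \<Longrightarrow> c \<le> path_length w \<gamma>"
  shows "c \<le> path_dist b w x y"
  unfolding path_dist_def
  using path_exists[of x y] assms by (intro cInf_greatest) auto

lemma path_dist_step:
  assumes w: "\<And>x y. w x y \<ge> 0" and bxy: "b x y > 0"
  shows "path_dist b w xo y \<le> path_dist b w xo x + w x y"
proof -
  have "path_dist b w xo y - w x y \<le> path_dist b w xo x"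
  proof (rule path_dist_ge)
    fix \<gamma> assume g: "is_path b \<gamma> xo x"
    then have ne: "\<gamma> \<noteq> []" and l: "last \<gamma> = x" by (auto simp: is_path_def)
    have "path_dist b w xo y \<le> path_length w (\<gamma> @ [y])"
      by (rule path_dist_le[OF w is_path_snoc[OF g bxy]])
    also have "\<dots> = path_length w \<gamma> + w x y" using ne l by (simp add: path_length_snoc)
    finally show "path_dist b w xo y - w x y \<le> path_length w \<gamma>" by simp
  qed
  then show ?thesis by simp
qed

lemma iv_v:
  assumes "is_metric \<sigma>" "finite_measure_fn \<mu>" "p_intrinsic b p \<sigma> \<mu>"
    "\<forall>x r. r \<ge> 0 \<longrightarrow> finite {y. \<sigma> x y \<le> r}"
  shows "\<exists>w \<mu>. alt_edge_weight b w \<and> finite_measure_fn \<mu> \<and> p_intrinsic b p w \<mu> \<and>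
            (\<forall>x r. finite {y. path_dist b w x y \<le> r})"
proof (intro exI conjI)
  have m: "\<sigma> x y \<ge> 0" "\<sigma> x y = \<sigma> y x" "\<sigma> x y = 0 \<longleftrightarrow> x = y" for x y
    using assms(1) unfolding is_metric_def by blast+
  show "alt_edge_weight b \<sigma>"
    unfolding alt_edge_weight_def
  proof (intro conjI allI impI)
    fix x y
    show "\<sigma> x y = \<sigma> y x" "\<sigma> x y \<ge> 0" by (rule m(2), rule m(1))
    assume "b x y > 0"
    then have "x \<noteq> y" using b_diag by auto
    then show "\<sigma> x y > 0" using m(1)[of x y] m(3)[of x y] by auto
  qed
  show "finite_measure_fn \<mu>" "p_intrinsic b p \<sigma> \<mu>" by fact+
  show "\<forall>x r. finite {y. path_dist b \<sigma> x y \<le> r}"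
  proof (intro allI)
    fix x r
    have "{y. path_dist b \<sigma> x y \<le> r} \<subseteq> {y. \<sigma> x y \<le> max r 0}"
    proof
      fix y assume "y \<in> {y. path_dist b \<sigma> x y \<le> r}"
      moreover have "\<sigma> x y \<le> path_dist b \<sigma> x y"
        by (rule path_dist_ge) (rule metric_le_path_length[OF assms(1)])
      ultimately show "y \<in> {y. \<sigma> x y \<le> max r 0}" by auto
    qed
    moreover have "finite {y. \<sigma> x y \<le> max r 0}" using assms(4) by auto
    ultimately show "finite {y. path_dist b \<sigma> x y \<le> r}" by (rule finite_subset)
  qed
qed

lemma v_iii:
  assumes "alt_edge_weight b w" "finite_measure_fn \<mu>" "p_intrinsic b p w \<mu>"
    "\<forall>x r. finite {y. path_dist b w x y \<le> r}"
  shows "\<exists>f\<in>Dp b (\<lambda>_. 0) p. liminf_inf f = \<infinity>"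
proof -
  fix xo :: 'x
  have w0: "w x y \<ge> 0" for x y using assms(1) by (simp add: alt_edge_weight_def)
  have wsym: "w x y = w y x" for x y using assms(1) by (simp add: alt_edge_weight_def)
  define f where "f y = path_dist b w xo y" for y
  have lip: "\<bar>f x - f y\<bar> \<le> w x y" if "b x y > 0" for x y
  proof -
    have "f y \<le> f x + w x y" unfolding f_def by (rule path_dist_step[OF w0 that])
    moreover have "b y x > 0" using that b_sym by simp
    then have "f x \<le> f y + w y x" unfolding f_def by (rule path_dist_step[OF w0])
    ultimately show ?thesis using wsym[of x y] by auto
  qed
  have \<mu>: "\<And>x. \<mu> x \<ge> 0" "\<mu> summable_on UNIV" using assms(2) by (auto simp: finite_measure_fn_def)
  have "Sb b p f \<le> (\<Sum>\<^sub>\<infinity>(x, y)\<in>UNIV. ennreal (b x y * w x y powr p))"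
    unfolding Sb_def
  proof (rule infsum_mono_ennreal)
    fix z :: "'x \<times> 'x"
    obtain x y where z: "z = (x, y)" by (cases z)
    have "b x y * \<bar>f x - f y\<bar> powr p \<le> b x y * w x y powr p"
    proof (cases "b x y > 0")
      case True
      then show ?thesis using lip[OF True] p0 by (intro mult_left_mono powr_mono2) auto
    next
      case False
      then have "b x y = 0" using b_nn[of x y] by simp
      then show ?thesis by simp
    qed
    then show "(case z of (x, y) \<Rightarrow> ennreal (b x y * \<bar>f x - f y\<bar> powr p))
        \<le> (case z of (x, y) \<Rightarrow> ennreal (b x y * w x y powr p))"
      using z by (simp add: ennreal_leI)
  qed
  also have "\<dots> = (\<Sum>\<^sub>\<infinity>x\<in>UNIV. \<Sum>\<^sub>\<infinity>y\<in>UNIV. ennreal (b x y * w x y powr p))"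
    by (rule infsum_UNIV_pair_ennreal)
  also have "\<dots> \<le> (\<Sum>\<^sub>\<infinity>x\<in>UNIV. ennreal (\<mu> x))"
    using assms(3) unfolding p_intrinsic_def by (intro infsum_mono_ennreal) auto
  also have "\<dots> = ennreal (\<Sum>\<^sub>\<infinity>x\<in>UNIV. \<mu> x)"
    using \<mu> by (intro infsum_ennreal_real) auto
  also have "\<dots> < \<infinity>" by simp
  finally have "f \<in> Dp b (\<lambda>_. 0) p" by (simp add: Dp0)
  moreover have "liminf_inf f = \<infinity>"
    by (rule finite_liminf) (use assms(4) in \<open>simp add: f_def\<close>)
  ultimately show ?thesis by blast
qed

end



lemma compact_complement_finite:
  assumes cT: "compactification T \<iota>" and U: "openin T U" "boundary T \<iota> \<subseteq> U"
  shows "finite (- (\<iota> -` U))"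
proof -
  have c: "compact_space T" "inj \<iota>" "range \<iota> \<subseteq> topspace T"
    "subtopology T (range \<iota>) = discrete_topology (range \<iota>)"
    using cT unfolding compactification_def by auto
  have "closedin T (topspace T - U)" using U(1) by auto
  then have "compactin T (topspace T - U)" using c(1) by (rule closedin_compact_space[rotated])
  moreover have sub: "topspace T - U \<subseteq> range \<iota>" using U(2) by (auto simp: boundary_def)
  ultimately have "compactin (subtopology T (range \<iota>)) (topspace T - U)"
    by (simp add: compactin_subtopology)
  then have fin: "finite (topspace T - U)" using c(4) by (simp add: compactin_discrete_topology)
  have "- (\<iota> -` U) = \<iota> -` (topspace T - U)" using c(3) by auto
  then show ?thesis using fin c(2) by (simp add: finite_vimageI)
qed

lemma half_eq:
  assumes "ennreal (1/2) * x = ennreal t" "t \<ge> 0"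
  shows "x = ennreal (2 * t)"
proof (cases x rule: ennreal_cases)
  case (real s)
  have "ennreal (1/2) * ennreal s = ennreal (1/2 * s)" by (rule ennreal_mult'[symmetric]) simp
  then have "ennreal (1/2 * s) = ennreal t" using assms(1) real by metis
  then have "1/2 * s = t" using real assms(2) by (subst (asm) ennreal_inj) auto
  then show ?thesis using real by simp
next
  case top
  have "ennreal (1/2) \<noteq> 0" by simp
  then have "ennreal (1/2) * x = top" using top by (simp add: ennreal_mult_top)
  then show ?thesis using assms(1) by simp
qed

context wg begin

lemma conn_small:
  "\<forall>\<epsilon>>0. \<exists>\<delta>>0. \<forall>v. Sb b p v < ennreal \<delta> \<longrightarrow> \<bar>v x - v xo\<bar> < \<epsilon>"
proof -
  have "(\<lambda>u v. b u v > 0)\<^sup>*\<^sup>* xo x" by (rule conn)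
  then show ?thesis
  proof (induction rule: rtranclp_induct)
    case base
    show ?case by (auto intro: exI[of _ 1])
  next
    case (step y z)
    show ?case
    proof (intro allI impI)
      fix \<epsilon> :: real assume \<epsilon>: "\<epsilon> > 0"
      have "\<epsilon>/2 > 0" using \<epsilon> by simp
      then obtain \<delta>1 where \<delta>1: "\<delta>1 > 0" "\<And>v. Sb b p v < ennreal \<delta>1 \<Longrightarrow> \<bar>v y - v xo\<bar> < \<epsilon>/2"
        using step.IH by blast
      define \<delta>2 where "\<delta>2 = b y z * (\<epsilon>/2) powr p"
      have \<delta>2: "\<delta>2 > 0" using step(2) \<epsilon> by (simp add: \<delta>2_def)
      show "\<exists>\<delta>>0. \<forall>v. Sb b p v < ennreal \<delta> \<longrightarrow> \<bar>v z - v xo\<bar> < \<epsilon>"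
      proof (intro exI[of _ "min \<delta>1 \<delta>2"] conjI allI impI)
        show "min \<delta>1 \<delta>2 > 0" using \<delta>1 \<delta>2 by simp
        fix v assume v: "Sb b p v < ennreal (min \<delta>1 \<delta>2)"
        have "ennreal (min \<delta>1 \<delta>2) \<le> ennreal \<delta>1" by (rule ennreal_leI) simp
        then have 1: "\<bar>v y - v xo\<bar> < \<epsilon>/2" using v \<delta>1(2) by (meson less_le_trans)
        have "ennreal (b y z * \<bar>v y - v z\<bar> powr p) \<le> Sb b p v"
          unfolding Sb_def using infsum_single_le_ennreal[of "(y, z)" UNIV
              "\<lambda>(x, y). ennreal (b x y * \<bar>v x - v y\<bar> powr p)"] by simp
        also have "\<dots> < ennreal (min \<delta>1 \<delta>2)" by (rule v)
        also have "\<dots> \<le> ennreal \<delta>2" by (rule ennreal_leI) simp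
        finally have "b y z * \<bar>v y - v z\<bar> powr p < \<delta>2"
          using b_nn[of y z] by (subst (asm) ennreal_less_iff) auto
        then have "\<bar>v y - v z\<bar> powr p < (\<epsilon>/2) powr p"
          using step(2) by (simp add: \<delta>2_def)
        have 2: "\<bar>v y - v z\<bar> < \<epsilon>/2"
        proof (rule ccontr)
          assume "\<not> \<bar>v y - v z\<bar> < \<epsilon>/2"
          then have "(\<epsilon>/2) powr p \<le> \<bar>v y - v z\<bar> powr p" using p0 \<epsilon> by (intro powr_mono2) auto
          with \<open>\<bar>v y - v z\<bar> powr p < (\<epsilon>/2) powr p\<close> show False by simp
        qed
        show "\<bar>v z - v xo\<bar> < \<epsilon>" using 1 2 by linarith
      qed
    qed
  qed
qed

lemma conn_small_set:
  assumes "finite K"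
  shows "\<exists>d>0. \<forall>x\<in>K. \<forall>v. Sb b p v < ennreal d \<longrightarrow> \<bar>v x - v xo\<bar> < 1/4"
  using assms
proof (induction K rule: finite_induct)
  case empty
  show ?case by (auto intro: exI[of _ 1])
next
  case (insert a K)
  obtain d where d: "d > 0" "\<forall>x\<in>K. \<forall>v. Sb b p v < ennreal d \<longrightarrow> \<bar>v x - v xo\<bar> < 1/4"
    using insert.IH by blast
  have q: "(1/4::real) > 0" by simp
  obtain d' where d': "d' > 0" "\<forall>v. Sb b p v < ennreal d' \<longrightarrow> \<bar>v a - v xo\<bar> < 1/4"
    using conn_small[of a xo] q by blast
  show ?case
  proof (intro exI[of _ "min d d'"] conjI ballI allI impI)
    show "min d d' > 0" using d d' by simp
    fix x v assume x: "x \<in> insert a K" and v: "Sb b p v < ennreal (min d d')"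
    have "ennreal (min d d') \<le> ennreal d" "ennreal (min d d') \<le> ennreal d'"
      by (rule ennreal_leI, simp)+
    then have "Sb b p v < ennreal d" "Sb b p v < ennreal d'" using v by (meson less_le_trans)+
    then show "\<bar>v x - v xo\<bar> < 1/4" using x d d' by auto
  qed
qed

end


context wg begin
lemma i_ii:
  assumes cT: "compactification T \<iota>" and par: "p_parabolic b (\<lambda>_. 0) p"
  shows "capY b (\<lambda>_. 0) p xo T \<iota> (boundary T \<iota>) = 0"
proof -
  have c: "Hausdorff_space T" "inj \<iota>" "range \<iota> \<subseteq> topspace T"
    using cT unfolding compactification_def by auto
  have "capY b (\<lambda>_. 0) p xo T \<iota> (boundary T \<iota>) \<le> 0"
  proof (rule ennreal_le_epsilon)
    fix e :: real assume e: "e > 0"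
    have e': "(e/2) powr p > 0" using e by simp
    obtain \<phi> where \<phi>: "finite {x. \<phi> x \<noteq> 0}" "\<forall>x\<in>{xo}. 1 \<le> \<phi> x" "Sb b p \<phi> < ennreal ((e/2) powr p)"
      using parabolic_D[OF par _ e', of "{xo}"] by auto
    define F where "F = {x. \<phi> x \<noteq> 0}"
    define u where "u x = 1 - min 1 (max 0 (\<phi> x))" for x
    define U where "U = topspace T - \<iota> ` F"
    have "closedin T (\<iota> ` F)"
      using Hausdorff_imp_t1_space[OF c(1)] \<phi>(1) c(3) unfolding t1_space_closedin_finite F_def
      by auto
    then have U_open: "openin T U" unfolding U_def by auto
    have U_bd: "boundary T \<iota> \<subseteq> U" unfolding U_def boundary_def by auto
    have preU: "\<iota> -` U = - F" unfolding U_def using c(2,3) by (auto simp: inj_eq image_subset_iff)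
    have Su: "Sb b p u \<le> Sb b p \<phi>"
      using Sb_contract[of 1 u \<phi>] by (auto simp: u_def)
    then have Su': "Sb b p u < ennreal ((e/2) powr p)" using \<phi>(3) by (rule le_less_trans)
    then have uD: "u \<in> Dp b (\<lambda>_. 0) p" by (simp add: Dp0 order.strict_trans[OF _ ennreal_less_top])
    have u1: "\<forall>x\<in>\<iota> -` U. 1 \<le> u x" unfolding preU F_def u_def by auto
    have uo: "u xo = 0" using \<phi>(2) by (simp add: u_def)
    have "energy b (\<lambda>_. 0) p u \<le> Sb b p u" unfolding energy0 by (rule half_le)
    then have En: "energy b (\<lambda>_. 0) p u < ennreal ((e/2) powr p)" using Su' by (rule le_less_trans)
    define t where "t = enn2real (energy b (\<lambda>_. 0) p u)"
    have t: "t \<ge> 0" "t < (e/2) powr p"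
      using En e' order.strict_trans[OF En ennreal_less_top] by (auto simp: t_def)
    have "onorm b (\<lambda>_. 0) p xo u = t powr (1/p)"
      unfolding onorm_def t_def[symmetric] using uo p0 by simp
    also have "\<dots> < ((e/2) powr p) powr (1/p)" using t p0 by (intro powr_less_mono2) auto
    also have "\<dots> = e/2" using e p0 by (simp add: powr_powr)
    finally have on: "onorm b (\<lambda>_. 0) p xo u < e" using e by simp
    have "capY b (\<lambda>_. 0) p xo T \<iota> (boundary T \<iota>) \<le> capo b (\<lambda>_. 0) p xo (\<iota> -` U)"
      unfolding capY_def using U_open U_bd by (intro INF_lower) auto
    also have "\<dots> \<le> ennreal (onorm b (\<lambda>_. 0) p xo u)"
      unfolding capo_def using uD u1 by (intro INF_lower) auto
    also have "\<dots> \<le> ennreal e" using on by (intro ennreal_leI) simp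
    finally show "capY b (\<lambda>_. 0) p xo T \<iota> (boundary T \<iota>) \<le> 0 + ennreal e" by simp
  qed
  then show ?thesis by simp
qed

end


context wg begin
lemma capY0_D:
  assumes cT: "compactification T \<iota>" and c0: "capY b (\<lambda>_. 0) p xo T \<iota> (boundary T \<iota>) = 0"
    and \<eta>: "\<eta> > 0"
  shows "\<exists>u F. finite F \<and> (\<forall>x. x \<notin> F \<longrightarrow> 1 \<le> u x) \<and> Sb b p u < ennreal \<eta> \<and> \<bar>u xo\<bar> < \<eta>"
proof -
  define \<eta>' where "\<eta>' = min \<eta> ((\<eta>/2) powr (1/p))"
  have \<eta>'0: "\<eta>' > 0" using \<eta> by (simp add: \<eta>'_def)
  have "capY b (\<lambda>_. 0) p xo T \<iota> (boundary T \<iota>) < ennreal \<eta>'" using c0 \<eta>'0 by simp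
  then obtain U where U: "openin T U" "boundary T \<iota> \<subseteq> U"
      "capo b (\<lambda>_. 0) p xo (\<iota> -` U) < ennreal \<eta>'"
    unfolding capY_def INF_less_iff by auto
  then obtain u where u: "u \<in> Dp b (\<lambda>_. 0) p" "\<forall>x\<in>\<iota> -` U. 1 \<le> u x"
      "ennreal (onorm b (\<lambda>_. 0) p xo u) < ennreal \<eta>'"
    unfolding capo_def INF_less_iff by auto
  have fin: "finite (- (\<iota> -` U))" by (rule compact_complement_finite[OF cT U(1,2)])
  define t where "t = enn2real (energy b (\<lambda>_. 0) p u)"
  have t0: "t \<ge> 0" by (simp add: t_def)
  have on: "(t + \<bar>u xo\<bar> powr p) powr (1/p) < \<eta>'"
    using u(3) \<eta>'0 unfolding onorm_def t_def[symmetric] by (simp add: ennreal_less_iff)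
  have "((t + \<bar>u xo\<bar> powr p) powr (1/p)) powr p < \<eta>' powr p"
    using on p0 by (intro powr_less_mono2) auto
  then have sum_lt: "t + \<bar>u xo\<bar> powr p < \<eta>' powr p" using t0 p0 by (simp add: powr_powr)
  have "\<eta>' powr p \<le> ((\<eta>/2) powr (1/p)) powr p"
    using \<eta>'0 p0 by (intro powr_mono2) (auto simp: \<eta>'_def)
  also have "\<dots> = \<eta>/2" using \<eta> p0 by (simp add: powr_powr)
  finally have tlt: "t < \<eta>/2" using sum_lt powr_ge_zero[of "\<bar>u xo\<bar>" p] by linarith
  have "\<bar>u xo\<bar> powr p < \<eta>' powr p" using sum_lt t0 by simp
  then have "\<bar>u xo\<bar> < \<eta>'"
  proof -
    assume h: "\<bar>u xo\<bar> powr p < \<eta>' powr p"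
    show ?thesis
    proof (rule ccontr)
      assume "\<not> \<bar>u xo\<bar> < \<eta>'"
      then have "\<eta>' powr p \<le> \<bar>u xo\<bar> powr p" using p0 \<eta>'0 by (intro powr_mono2) auto
      with h show False by simp
    qed
  qed
  then have uo: "\<bar>u xo\<bar> < \<eta>" by (simp add: \<eta>'_def)
  have Efin: "energy b (\<lambda>_. 0) p u < \<infinity>" using u(1) by (simp add: Dp_def)
  have "energy b (\<lambda>_. 0) p u = ennreal t" using Efin by (simp add: t_def ennreal_enn2real)
  then have "ennreal (1/2) * Sb b p u = ennreal t" by (simp only: energy0)
  then have "Sb b p u = ennreal (2 * t)" using t0 by (rule half_eq)
  then have Su: "Sb b p u < ennreal \<eta>" using tlt t0 by (simp add: ennreal_lessI)
  show ?thesis using fin u(2) Su uo by (intro exI[of _ u] exI[of _ "- (\<iota> -` U)"]) auto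
qed

end


context wg begin
lemma ii_i:
  assumes cT: "compactification T \<iota>" and c0: "capY b (\<lambda>_. 0) p xo T \<iota> (boundary T \<iota>) = 0"
  shows "p_parabolic b (\<lambda>_. 0) p"
proof (rule parabolic_if)
  fix K :: "'x set" and e :: real assume K: "finite K" and e: "e > 0"
  obtain d where d: "d > 0" "\<forall>x\<in>K. \<forall>v. Sb b p v < ennreal d \<longrightarrow> \<bar>v x - v xo\<bar> < 1/4"
    using conn_small_set[OF K] by blast
  define \<eta> where "\<eta> = min (1/4) (min d (e / 2 powr p))"
  have \<eta>0: "\<eta> > 0" using d e by (simp add: \<eta>_def)
  obtain u F where u: "finite F" "\<forall>x. x \<notin> F \<longrightarrow> 1 \<le> u x" "Sb b p u < ennreal \<eta>" "\<bar>u xo\<bar> < \<eta>"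
    using capY0_D[OF cT c0 \<eta>0] by blast
  have "ennreal \<eta> \<le> ennreal d" by (rule ennreal_leI) (simp add: \<eta>_def)
  then have Sd: "Sb b p u < ennreal d" using u(3) by (rule less_le_trans[rotated])
  define v where "v x = 2 - 2 * u x" for x
  have "Sb b p v \<le> ennreal (2 powr p) * Sb b p u"
    by (rule Sb_contract) (auto simp: v_def abs_if)
  also have "\<dots> < ennreal e"
  proof (cases "Sb b p u" rule: ennreal_cases)
    case (real s)
    then have "s < \<eta>" using u(3) by (simp add: ennreal_less_iff)
    then have "s < e / 2 powr p" by (simp add: \<eta>_def)
    then have "s * 2 powr p < e" by (simp add: pos_less_divide_eq)
    then have lt: "2 powr p * s < e" by (simp add: mult.commute)
    have "ennreal (2 powr p) * Sb b p u = ennreal (2 powr p * s)"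
      unfolding real by (rule ennreal_mult'[symmetric]) simp
    also have "\<dots> < ennreal e" using lt e by (intro ennreal_lessI) auto
    finally show ?thesis .
  next
    case top
    then show ?thesis using u(3) by simp
  qed
  finally have 1: "Sb b p v < ennreal e" .
  have 2: "\<forall>x\<in>K. 1 \<le> v x"
  proof
    fix x assume "x \<in> K"
    then have "\<bar>u x - u xo\<bar> < 1/4" using d(2) Sd by blast
    moreover have "\<eta> \<le> 1/4" unfolding \<eta>_def by (rule min.cobounded1)
    ultimately have "u x < 1/2" using u(4) by linarith
    then show "1 \<le> v x" by (simp add: v_def)
  qed
  have "{x. 0 < v x} \<subseteq> F" using u(2) by (force simp: v_def)
  then have 3: "finite {x. 0 < v x}" using u(1) by (rule finite_subset)
  show "\<exists>v. Sb b p v < ennreal e \<and> (\<forall>x\<in>K. 1 \<le> v x) \<and> finite {x. 0 < v x}"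
    using 1 2 3 by blast
qed

end


theorem proposition3p15:
  fixes b :: "'x \<Rightarrow> 'x \<Rightarrow> real" and m c :: "'x \<Rightarrow> real" and p :: real and xo :: 'x
  assumes "weighted_graph b m c"
    and "c = (\<lambda>_. 0)"
    and "p \<ge> 1"
  shows
   "(\<forall>(T :: 'y topology) \<iota>. compactification T \<iota> \<longrightarrow>
        (p_parabolic b c p \<longleftrightarrow> capY b c p xo T \<iota> (boundary T \<iota>) = 0))
    \<and> (p_parabolic b c p \<longleftrightarrow> (\<exists>f \<in> Dp b c p. liminf_inf f = \<infinity>))
    \<and> (p_parabolic b c p \<longleftrightarrow>
         (\<exists>\<sigma> \<mu>. is_metric \<sigma> \<and> finite_measure_fn \<mu> \<and> p_intrinsic b p \<sigma> \<mu> \<and>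
            induces_discrete \<sigma> \<and> (\<forall>x r. r \<ge> 0 \<longrightarrow> finite {y. \<sigma> x y \<le> r})))
    \<and> (p_parabolic b c p \<longleftrightarrow>
         (\<exists>w \<mu>. alt_edge_weight b w \<and> finite_measure_fn \<mu> \<and> p_intrinsic b p w \<mu> \<and>
            (\<forall>x r. finite {y. path_dist b w x y \<le> r})))"
proof -
  have wgc: "weighted_graph b m (\<lambda>_. 0)" using assms(1,2) by simp
  interpret wg b m p by unfold_locales (rule wgc, rule assms(3))
  have A: "\<forall>(T :: 'y topology) \<iota>. compactification T \<iota> \<longrightarrow>
        (p_parabolic b (\<lambda>_. 0) p \<longleftrightarrow> capY b (\<lambda>_. 0) p xo T \<iota> (boundary T \<iota>) = 0)"
    using i_ii ii_i by blast
  have B: "p_parabolic b (\<lambda>_. 0) p \<longleftrightarrow> (\<exists>f \<in> Dp b (\<lambda>_. 0) p. liminf_inf f = \<infinity>)"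
    using i_iii iii_i by blast
  have C: "p_parabolic b (\<lambda>_. 0) p \<longleftrightarrow>
         (\<exists>\<sigma> \<mu>. is_metric \<sigma> \<and> finite_measure_fn \<mu> \<and> p_intrinsic b p \<sigma> \<mu> \<and>
            induces_discrete \<sigma> \<and> (\<forall>x r. r \<ge> 0 \<longrightarrow> finite {y. \<sigma> x y \<le> r}))"
  proof
    assume "p_parabolic b (\<lambda>_. 0) p"
    then obtain f where "f \<in> Dp b (\<lambda>_. 0) p" "liminf_inf f = \<infinity>" using i_iii by blast
    then show "\<exists>\<sigma> \<mu>. is_metric \<sigma> \<and> finite_measure_fn \<mu> \<and> p_intrinsic b p \<sigma> \<mu> \<and>
            induces_discrete \<sigma> \<and> (\<forall>x r. r \<ge> 0 \<longrightarrow> finite {y. \<sigma> x y \<le> r})"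
      by (rule iii_iv)
  next
    assume "\<exists>\<sigma> \<mu>. is_metric \<sigma> \<and> finite_measure_fn \<mu> \<and> p_intrinsic b p \<sigma> \<mu> \<and>
            induces_discrete \<sigma> \<and> (\<forall>x r. r \<ge> 0 \<longrightarrow> finite {y. \<sigma> x y \<le> r})"
    then obtain \<sigma> \<mu> where "is_metric \<sigma>" "finite_measure_fn \<mu>" "p_intrinsic b p \<sigma> \<mu>"
        "\<forall>x r. r \<ge> 0 \<longrightarrow> finite {y. \<sigma> x y \<le> r}" by blast
    then obtain w \<mu>' where "alt_edge_weight b w" "finite_measure_fn \<mu>'" "p_intrinsic b p w \<mu>'"
        "\<forall>x r. finite {y. path_dist b w x y \<le> r}" using iv_v by blast
    then obtain f where "f \<in> Dp b (\<lambda>_. 0) p" "liminf_inf f = \<infinity>" using v_iii by blast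
    then show "p_parabolic b (\<lambda>_. 0) p" by (rule iii_i)
  qed
  have D: "p_parabolic b (\<lambda>_. 0) p \<longleftrightarrow>
         (\<exists>w \<mu>. alt_edge_weight b w \<and> finite_measure_fn \<mu> \<and> p_intrinsic b p w \<mu> \<and>
            (\<forall>x r. finite {y. path_dist b w x y \<le> r}))"
  proof
    assume "p_parabolic b (\<lambda>_. 0) p"
    then obtain \<sigma> \<mu> where "is_metric \<sigma>" "finite_measure_fn \<mu>" "p_intrinsic b p \<sigma> \<mu>"
        "\<forall>x r. r \<ge> 0 \<longrightarrow> finite {y. \<sigma> x y \<le> r}" using C by blast
    then show "\<exists>w \<mu>. alt_edge_weight b w \<and> finite_measure_fn \<mu> \<and> p_intrinsic b p w \<mu> \<and>
            (\<forall>x r. finite {y. path_dist b w x y \<le> r})" by (rule iv_v)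
  next
    assume "\<exists>w \<mu>. alt_edge_weight b w \<and> finite_measure_fn \<mu> \<and> p_intrinsic b p w \<mu> \<and>
            (\<forall>x r. finite {y. path_dist b w x y \<le> r})"
    then obtain w \<mu> where "alt_edge_weight b w" "finite_measure_fn \<mu>" "p_intrinsic b p w \<mu>"
        "\<forall>x r. finite {y. path_dist b w x y \<le> r}" by blast
    then obtain f where "f \<in> Dp b (\<lambda>_. 0) p" "liminf_inf f = \<infinity>" using v_iii by blast
    then show "p_parabolic b (\<lambda>_. 0) p" by (rule iii_i)
  qed
  show ?thesis unfolding assms(2) using A B C D by blast
qed

end
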